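(* Let $X$ and $Y$ be uniformly locally finite metric spaces, and $\Phi:\mathrm{C}^*_u(X)\to\mathrm{C}^*_u(Y)$ an embedding such that $\Phi(\ell_\infty(X))\subset\ell_\infty(Y)$ and $\Phi(e_{xx})$ has rank $1$ for all $x\in X$. Let $Z\subset Y$ be the subset with $\chi_Z=\mathrm{SOT}\text{-}\sum_{x\in X}\Phi(e_{xx})$. If $\Phi(\mathrm{C}^*_u(X))$ is $\varepsilon$-almost cobounded in $\chi_Z\mathrm{C}^*_u(Y)\chi_Z$ for some $\varepsilon\in(0,1)$, then there is a bijective coarse quotient map $X\to Z$ (with $Z$ carrying the metric of $Y$).
   Context: $e_{xy}$ is the rank-one partial isometry on $\ell_2(X)$ with $e_{xy}\delta_x=\delta_y$ and $e_{xy}\delta_z=0$ for $z\ne x$; $\chi_A$ is the orthogonal projection onto $\ell_2(A)$. $\mathrm{C}^*_u(X)$: norm closure of finite-propagation operators, $\mathrm{propg}(a)=\sup\{d(x,y):\langle a\delta_x,\delta_y\rangle\ne0\}$; $\ell_\infty(X)$ diagonal subalgebra. Embedding = injective $*$-homomorphism. For $A_1\subset A_2\subset\mathrm{C}^*_u(Y)$, $A_1$ is $\varepsilon$-almost cobounded in $A_2$ if there is $k>0$ such that for all $b\in A_2$ there are $a_1,\dots,a_\ell\in A_1$ and $c_1,\dots,c_\ell\in A_2$ with $\mathrm{propg}(c_i)\le k$ and $\|b-\sum_{i=1}^\ell c_ia_i\|\le\varepsilon$. Coarse quotient: coarse map such that there is $K>0$ with: for every $\varepsilon>0$ there is $\delta>0$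 with $B(f(x),\varepsilon)\subset f(B(x,\delta))^K$ for all $x$ (closed balls, $A^K$ the closed $K$-neighborhood). *)

theory Defs
  imports "HOL-Analysis.Analysis"
begin

definition l2 :: "('a \<Rightarrow> complex) set" where
  "l2 = {f. (\<lambda>x. (cmod (f x))\<^sup>2) summable_on UNIV}"

definition l2norm :: "('a \<Rightarrow> complex) \<Rightarrow> real" where
  "l2norm f = sqrt (\<Sum>\<^sub>\<infinity>x. (cmod (f x))\<^sup>2)"

definition l2inner :: "('a \<Rightarrow> complex) \<Rightarrow> ('a \<Rightarrow> complex) \<Rightarrow> complex" where
  "l2inner f g = (\<Sum>\<^sub>\<infinity>x. f x * cnj (g x))"

type_synonym 'a op = "('a \<Rightarrow> complex) \<Rightarrow> ('a \<Rightarrow> complex)"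

definition op_add :: "'a op \<Rightarrow> 'a op \<Rightarrow> 'a op" where
  "op_add S T = (\<lambda>f x. S f x + T f x)"

definition op_diff :: "'a op \<Rightarrow> 'a op \<Rightarrow> 'a op" where
  "op_diff S T = (\<lambda>f x. S f x - T f x)"

definition op_scale :: "complex \<Rightarrow> 'a op \<Rightarrow> 'a op" where
  "op_scale c T = (\<lambda>f x. c * T f x)"

definition op_sum :: "('i \<Rightarrow> 'a op) \<Rightarrow> 'i set \<Rightarrow> 'a op" where
  "op_sum P I = (\<lambda>f x. \<Sum>i\<in>I. P i f x)"

text \<open>Bounded linear operators on ell_2(X); normalised to be 0 outside ell_2(X),
  so that sums, scalar multiples and composition of functions are the operator operations.\<close>

definition bop :: "'a op \<Rightarrow> bool" where
  "bop T \<longleftrightarrow> (\<forall>f. f \<notin> l2 \<longrightarrow> T f = (\<lambda>_. 0)) \<and> (\<forall>f\<in>l2. T f \<in> l2)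
     \<and> (\<forall>f\<in>l2. \<forall>g\<in>l2. \<forall>c. T (\<lambda>x. f x + c * g x) = (\<lambda>x. T f x + c * T g x))
     \<and> (\<exists>K. \<forall>f\<in>l2. l2norm (T f) \<le> K * l2norm f)"

definition op_norm :: "'a op \<Rightarrow> real" where
  "op_norm T = Sup ((\<lambda>f. l2norm (T f)) ` {f\<in>l2. l2norm f \<le> 1})"

definition adj :: "'a op \<Rightarrow> 'a op" where
  "adj T = (\<lambda>g. if g \<in> l2 then (THE h. h \<in> l2 \<and> (\<forall>f\<in>l2. l2inner (T f) g = l2inner f h)) else (\<lambda>_. 0))"

definition delta :: "'a \<Rightarrow> 'a \<Rightarrow> complex" where
  "delta x = (\<lambda>y. if y = x then 1 else 0)"

definition entry :: "'a op \<Rightarrow> 'a \<Rightarrow> 'a \<Rightarrow> complex" where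
  "entry T x y = T (delta x) y"

definition propg_le :: "('a::metric_space) op \<Rightarrow> real \<Rightarrow> bool" where
  "propg_le T k \<longleftrightarrow> (\<forall>x y. entry T x y \<noteq> 0 \<longrightarrow> dist x y \<le> k)"

definition uroe :: "('a::metric_space) op set" where
  "uroe = {T. bop T \<and> (\<forall>e>0. \<exists>S. bop S \<and> (\<exists>k. propg_le S k) \<and> op_norm (op_diff T S) < e)}"

definition mult_op :: "('a \<Rightarrow> complex) \<Rightarrow> 'a op" where
  "mult_op h = (\<lambda>f. if f \<in> l2 then (\<lambda>x. h x * f x) else (\<lambda>_. 0))"

definition linf :: "'a op set" where
  "linf = {mult_op h | h. bounded (range h)}"

definition chi :: "'a set \<Rightarrow> 'a op" where
  "chi A = mult_op (\<lambda>x. if x \<in> A then 1 else 0)"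

definition exy :: "'a \<Rightarrow> 'a \<Rightarrow> 'a op" where
  "exy x y = (\<lambda>f. if f \<in> l2 then (\<lambda>z. if z = y then f x else 0) else (\<lambda>_. 0))"

definition rank_one :: "'a op \<Rightarrow> bool" where
  "rank_one T \<longleftrightarrow> (\<exists>v. v \<noteq> (\<lambda>_. 0) \<and> T ` l2 = {(\<lambda>y. c * v y) | c. True})"

definition sot_sum :: "('i \<Rightarrow> 'a op) \<Rightarrow> 'a op \<Rightarrow> bool" where
  "sot_sum P T \<longleftrightarrow> (\<forall>f\<in>l2. \<forall>e>0. \<exists>F. finite F \<and>
      (\<forall>G. finite G \<and> F \<subseteq> G \<longrightarrow> l2norm (op_diff T (op_sum P G) f) < e))"

definition embedding :: "(('a::metric_space) op \<Rightarrow> ('b::metric_space) op) \<Rightarrow> bool" where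
  "embedding \<Phi> \<longleftrightarrow> \<Phi> ` uroe \<subseteq> uroe \<and> inj_on \<Phi> uroe
     \<and> (\<forall>S\<in>uroe. \<forall>T\<in>uroe. \<Phi> (op_add S T) = op_add (\<Phi> S) (\<Phi> T) \<and> \<Phi> (S \<circ> T) = \<Phi> S \<circ> \<Phi> T)
     \<and> (\<forall>T\<in>uroe. \<forall>c. \<Phi> (op_scale c T) = op_scale c (\<Phi> T))
     \<and> (\<forall>T\<in>uroe. \<Phi> (adj T) = adj (\<Phi> T))"

definition almost_cobounded :: "real \<Rightarrow> ('b::metric_space) op set \<Rightarrow> 'b op set \<Rightarrow> bool" where
  "almost_cobounded \<epsilon> A1 A2 \<longleftrightarrow> (\<exists>k>0. \<forall>b\<in>A2. \<exists>(l::nat) a c.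
      (\<forall>i<l. a i \<in> A1 \<and> c i \<in> A2 \<and> propg_le (c i) k)
      \<and> op_norm (op_diff b (op_sum (\<lambda>i. c i \<circ> a i) {..<l})) \<le> \<epsilon>)"

definition unif_locally_finite :: "'a::metric_space itself \<Rightarrow> bool" where
  "unif_locally_finite _ \<longleftrightarrow> (\<forall>r. \<exists>N::nat. \<forall>x::'a. finite (cball x r) \<and> card (cball x r) \<le> N)"

definition coarse_map :: "('a::metric_space \<Rightarrow> 'b::metric_space) \<Rightarrow> bool" where
  "coarse_map f \<longleftrightarrow> (\<forall>r. \<exists>s. \<forall>x x'. dist x x' \<le> r \<longrightarrow> dist (f x) (f x') \<le> s)"

definition coarse_quotient_on :: "('a::metric_space \<Rightarrow> 'b::metric_space) \<Rightarrow> 'b set \<Rightarrow> bool" where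
  "coarse_quotient_on f Z \<longleftrightarrow> f ` UNIV \<subseteq> Z \<and> coarse_map f \<and>
     (\<exists>K>0. \<forall>\<epsilon>>0. \<exists>\<delta>>0. \<forall>x.
        cball (f x) \<epsilon> \<inter> Z \<subseteq> {z\<in>Z. \<exists>w\<in>f ` cball x \<delta>. dist z w \<le> K})"

end

theory Submission
  imports Defs
begin


lemma l2norm_nonneg: "0 \<le> l2norm f"
  by (simp add: l2norm_def infsum_nonneg)

lemma l2norm_sq: "(l2norm f)\<^sup>2 = (\<Sum>\<^sub>\<infinity>x. (cmod (f x))\<^sup>2)"
  unfolding l2norm_def by (simp add: infsum_nonneg)

lemma infsum_single:
  assumes "\<And>z. z \<noteq> y \<Longrightarrow> g z = (0::'b::{comm_monoid_add,t2_space})"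
  shows "infsum g UNIV = g y"
proof -
  have "infsum g UNIV = infsum g {y}"
    by (rule infsum_cong_neutral) (use assms in auto)
  thus ?thesis by simp
qed

lemma l2_finite_support:
  assumes "finite S" "\<And>x. x \<notin> S \<Longrightarrow> f x = 0"
  shows "f \<in> l2"
proof -
  have "(\<lambda>x. (cmod (f x))\<^sup>2) summable_on S" using assms by simp
  hence "(\<lambda>x. (cmod (f x))\<^sup>2) summable_on UNIV"
    by (rule summable_on_cong_neutral[THEN iffD1, rotated -1]) (use assms in auto)
  thus ?thesis by (simp add: l2_def)
qed

lemma l2_zero[simp]: "(\<lambda>_. 0) \<in> l2"
  by (rule l2_finite_support[of "{}"]) auto

lemma l2norm_zero[simp]: "l2norm (\<lambda>_. 0) = 0"
  by (simp add: l2norm_def)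

lemma l2norm_single:
  assumes "\<And>z. z \<noteq> y \<Longrightarrow> g z = 0"
  shows "l2norm g = cmod (g y)"
proof -
  have "(\<Sum>\<^sub>\<infinity>x. (cmod (g x))\<^sup>2) = (cmod (g y))\<^sup>2"
    by (rule infsum_single) (use assms in auto)
  thus ?thesis by (simp add: l2norm_def)
qed

lemma delta_l2[simp]: "delta x \<in> l2"
  by (rule l2_finite_support[of "{x}"]) (auto simp: delta_def)

lemma l2norm_delta[simp]: "l2norm (delta x) = 1"
  by (subst l2norm_single[where y=x]) (auto simp: delta_def)

lemma l2_summable: "f \<in> l2 \<Longrightarrow> (\<lambda>x. (cmod (f x))\<^sup>2) summable_on A"
  unfolding l2_def by (auto intro: summable_on_subset)

lemma l2_point:
  assumes "f \<in> l2"
  shows "cmod (f x) \<le> l2norm f"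
proof -
  have "sum (\<lambda>x. (cmod (f x))\<^sup>2) {x} \<le> (\<Sum>\<^sub>\<infinity>x. (cmod (f x))\<^sup>2)"
    by (rule finite_sum_le_infsum) (use assms in \<open>auto simp: l2_def\<close>)
  hence "(cmod (f x))\<^sup>2 \<le> (l2norm f)\<^sup>2" by (simp add: l2norm_sq)
  thus ?thesis using l2norm_nonneg by (meson abs_le_square_iff abs_norm_cancel dual_order.trans abs_ge_self power2_le_imp_le)
qed

lemma l2norm_eq0:
  assumes "f \<in> l2" "l2norm f = 0"
  shows "f = (\<lambda>_. 0)"
proof
  fix x show "f x = 0" using l2_point[OF assms(1), of x] assms(2) by simp
qed

lemma l2_mono:
  assumes "f \<in> l2" "\<And>x. cmod (g x) \<le> cmod (f x)"
  shows "g \<in> l2" "l2norm g \<le> l2norm f"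
proof -
  have s: "(\<lambda>x. (cmod (f x))\<^sup>2) summable_on UNIV" using assms by (simp add: l2_def)
  have le: "(cmod (g x))\<^sup>2 \<le> (cmod (f x))\<^sup>2" for x using assms(2)[of x] by (simp add: power_mono)
  have sg: "(\<lambda>x. (cmod (g x))\<^sup>2) summable_on UNIV"
    by (rule summable_on_comparison_test[OF s]) (use le in auto)
  thus "g \<in> l2" by (simp add: l2_def)
  have "(\<Sum>\<^sub>\<infinity>x. (cmod (g x))\<^sup>2) \<le> (\<Sum>\<^sub>\<infinity>x. (cmod (f x))\<^sup>2)"
    by (rule infsum_mono[OF sg s]) (use le in auto)
  thus "l2norm g \<le> l2norm f" by (simp add: l2norm_def)
qed

lemma l2_scale:
  assumes "f \<in> l2"
  shows "(\<lambda>x. c * f x) \<in> l2" "l2norm (\<lambda>x. c * f x) = cmod c * l2norm f"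
proof -
  have e: "(\<lambda>x. (cmod (c * f x))\<^sup>2) = (\<lambda>x. (cmod c)\<^sup>2 * (cmod (f x))\<^sup>2)"
    by (simp add: norm_mult power_mult_distrib)
  have "(\<lambda>x. (cmod c)\<^sup>2 * (cmod (f x))\<^sup>2) summable_on UNIV"
    using assms by (intro summable_on_cmult_right) (simp add: l2_def)
  thus "(\<lambda>x. c * f x) \<in> l2" by (simp add: l2_def e)
  have "(\<Sum>\<^sub>\<infinity>x. (cmod (c * f x))\<^sup>2) = (cmod c)\<^sup>2 * (\<Sum>\<^sub>\<infinity>x. (cmod (f x))\<^sup>2)"
    unfolding e by (rule infsum_cmult_right')
  thus "l2norm (\<lambda>x. c * f x) = cmod c * l2norm f"
    by (simp add: l2norm_def real_sqrt_mult)
qed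

lemma sq_lincomb_bound:
  fixes a b c :: complex
  shows "(cmod (a + c * b))\<^sup>2 \<le> 2 * (cmod a)\<^sup>2 + 2 * ((cmod c)\<^sup>2 * (cmod b)\<^sup>2)"
proof -
  have t: "cmod (a + c * b) \<le> cmod a + cmod c * cmod b"
    by (metis norm_mult norm_triangle_ineq)
  have n: "0 \<le> cmod (a + c * b)" by simp
  have "(cmod (a + c * b))\<^sup>2 \<le> (cmod a + cmod c * cmod b)\<^sup>2"
    using power_mono[OF t n] .
  also have "\<dots> \<le> 2 * (cmod a)\<^sup>2 + 2 * (cmod c * cmod b)\<^sup>2"
  proof -
    have "0 \<le> (cmod a - cmod c * cmod b)\<^sup>2" by simp
    thus ?thesis unfolding power2_sum power2_diff by linarith
  qed
  finally show ?thesis by (simp add: power_mult_distrib)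
qed

lemma l2_lincomb:
  assumes "f \<in> l2" "g \<in> l2"
  shows "(\<lambda>x. f x + c * g x) \<in> l2"
    "l2norm (\<lambda>x. f x + c * g x) \<le> 2 * (l2norm f + cmod c * l2norm g)"
proof -
  have sf: "(\<lambda>x. (cmod (f x))\<^sup>2) summable_on UNIV" and sg: "(\<lambda>x. (cmod (g x))\<^sup>2) summable_on UNIV"
    using assms by (auto simp: l2_def)
  have sb: "(\<lambda>x. 2 * (cmod (f x))\<^sup>2 + 2 * ((cmod c)\<^sup>2 * (cmod (g x))\<^sup>2)) summable_on UNIV"
    by (intro summable_on_add summable_on_cmult_right sf sg)
  have sh: "(\<lambda>x. (cmod (f x + c * g x))\<^sup>2) summable_on UNIV"
    by (rule summable_on_comparison_test[OF sb]) (auto simp: sq_lincomb_bound)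
  thus "(\<lambda>x. f x + c * g x) \<in> l2" by (simp add: l2_def)
  have "(\<Sum>\<^sub>\<infinity>x. (cmod (f x + c * g x))\<^sup>2) \<le> (\<Sum>\<^sub>\<infinity>x. 2 * (cmod (f x))\<^sup>2 + 2 * ((cmod c)\<^sup>2 * (cmod (g x))\<^sup>2))"
    by (rule infsum_mono[OF sh sb]) (auto simp: sq_lincomb_bound)
  also have "\<dots> = 2 * (l2norm f)\<^sup>2 + 2 * ((cmod c)\<^sup>2 * (l2norm g)\<^sup>2)"
    by (simp add: infsum_add summable_on_cmult_right sf sg infsum_cmult_right' l2norm_sq)
  also have "\<dots> \<le> (2 * (l2norm f + cmod c * l2norm g))\<^sup>2"
    using l2norm_nonneg[of f] l2norm_nonneg[of g]
    by (simp add: power2_eq_square algebra_simps)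
  finally have "(l2norm (\<lambda>x. f x + c * g x))\<^sup>2 \<le> (2 * (l2norm f + cmod c * l2norm g))\<^sup>2"
    by (simp add: l2norm_sq)
  thus "l2norm (\<lambda>x. f x + c * g x) \<le> 2 * (l2norm f + cmod c * l2norm g)"
    by (rule power2_le_imp_le) (use l2norm_nonneg[of f] l2norm_nonneg[of g] in simp)
qed

lemma l2_tail:
  assumes "f \<in> l2" "\<eta> > 0"
  shows "\<exists>F. finite F \<and> l2norm (\<lambda>x. if x \<in> F then 0 else f x) < \<eta>"
proof -
  define g where "g x = (cmod (f x))\<^sup>2" for x
  have sg: "g summable_on UNIV" using assms unfolding g_def by (simp add: l2_def)
  obtain F where F: "finite F" "dist (sum g F) (infsum g UNIV) \<le> \<eta>\<^sup>2/2"
    using infsum_finite_approximation[OF sg, of "\<eta>\<^sup>2/2"] assms by auto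
  define t where "t x = (if x \<in> F then 0 else g x)" for x
  define h where "h x = (if x \<in> F then g x else 0)" for x
  have st: "t summable_on UNIV"
    by (rule summable_on_comparison_test[OF sg]) (auto simp: t_def g_def)
  have "g summable_on F" using F(1) by simp
  hence sh: "h summable_on UNIV"
    by (rule summable_on_cong_neutral[THEN iffD1, rotated -1]) (auto simp: h_def)
  have "infsum h UNIV = infsum g F" by (rule infsum_cong_neutral) (auto simp: h_def)
  hence ih: "infsum h UNIV = sum g F" using F(1) by simp
  have "infsum g UNIV = infsum (\<lambda>x. t x + h x) UNIV"
    by (rule infsum_cong) (auto simp: t_def h_def)
  also have "\<dots> = infsum t UNIV + sum g F" by (simp add: infsum_add st sh ih)
  finally have "infsum t UNIV \<le> \<eta>\<^sup>2/2" using F(2) by (simp add: dist_real_def)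
  moreover have "(l2norm (\<lambda>x. if x \<in> F then 0 else f x))\<^sup>2 = infsum t UNIV"
    unfolding l2norm_sq t_def g_def by (rule infsum_cong) simp
  moreover have "\<eta>\<^sup>2/2 < \<eta>\<^sup>2" using assms(2) by simp
  ultimately have "(l2norm (\<lambda>x. if x \<in> F then 0 else f x))\<^sup>2 < \<eta>\<^sup>2"
    by linarith
  hence "l2norm (\<lambda>x. if x \<in> F then 0 else f x) < \<eta>"
    using assms(2) by (simp add: power_less_imp_less_base l2norm_nonneg)
  thus ?thesis using F(1) by blast
qed



lemma amgm_t:
  fixes a b t :: real
  assumes "t > 0"
  shows "a * b \<le> t/2 * a\<^sup>2 + (1/(2*t)) * b\<^sup>2"
proof -
  have "0 \<le> (t*a - b)\<^sup>2 / t" using assms by simp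
  also have "(t*a - b)\<^sup>2 / t = t * a\<^sup>2 - 2*a*b + b\<^sup>2 / t"
    using assms by (simp add: field_simps power2_eq_square)
  finally show ?thesis by (simp add: field_simps)
qed

lemma l2_prod_abs_summable:
  assumes "f \<in> l2" "g \<in> l2"
  shows "(\<lambda>x. norm (f x * cnj (g x))) summable_on UNIV"
proof -
  have sb: "(\<lambda>x. 1/2 * (cmod (f x))\<^sup>2 + (1/(2*1)) * (cmod (g x))\<^sup>2) summable_on UNIV"
    using assms by (intro summable_on_add summable_on_cmult_right) (auto simp: l2_def)
  show ?thesis
  proof (rule summable_on_comparison_test[OF sb])
    fix x
    show "norm (f x * cnj (g x)) \<le> 1/2 * (cmod (f x))\<^sup>2 + (1/(2*1)) * (cmod (g x))\<^sup>2"
      by (simp only: norm_mult complex_mod_cnj) (rule amgm_t, simp)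
  qed simp
qed

lemma l2_prod_summable:
  assumes "f \<in> l2" "g \<in> l2"
  shows "(\<lambda>x. f x * cnj (g x)) summable_on UNIV"
  by (rule abs_summable_summable) (rule l2_prod_abs_summable[OF assms])

lemma l2inner_zero_left[simp]: "l2inner (\<lambda>_. 0) g = 0"
  by (simp add: l2inner_def)

lemma l2inner_zero_right[simp]: "l2inner g (\<lambda>_. 0) = 0"
  by (simp add: l2inner_def)

lemma l2inner_CS:
  assumes "f \<in> l2" "g \<in> l2"
  shows "cmod (l2inner f g) \<le> l2norm f * l2norm g"
proof (cases "l2norm f = 0 \<or> l2norm g = 0")
  case True
  then show ?thesis
    using l2norm_eq0[OF assms(1)] l2norm_eq0[OF assms(2)] by auto
next
  case False
  hence pf: "l2norm f > 0" and pg: "l2norm g > 0" using l2norm_nonneg[of f] l2norm_nonneg[of g] by auto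
  define t where "t = l2norm g / l2norm f"
  have t: "t > 0" using pf pg by (simp add: t_def)
  have sf: "(\<lambda>x. (cmod (f x))\<^sup>2) summable_on UNIV" and sg: "(\<lambda>x. (cmod (g x))\<^sup>2) summable_on UNIV"
    using assms by (auto simp: l2_def)
  have sb: "(\<lambda>x. t/2 * (cmod (f x))\<^sup>2 + (1/(2*t)) * (cmod (g x))\<^sup>2) summable_on UNIV"
    by (intro summable_on_add summable_on_cmult_right sf sg)
  have "cmod (l2inner f g) \<le> (\<Sum>\<^sub>\<infinity>x. norm (f x * cnj (g x)))"
    unfolding l2inner_def by (rule norm_infsum_bound) (rule l2_prod_abs_summable[OF assms])
  also have "\<dots> \<le> (\<Sum>\<^sub>\<infinity>x. t/2 * (cmod (f x))\<^sup>2 + (1/(2*t)) * (cmod (g x))\<^sup>2)"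
  proof (rule infsum_mono[OF l2_prod_abs_summable[OF assms] sb])
    fix x
    show "norm (f x * cnj (g x)) \<le> t/2 * (cmod (f x))\<^sup>2 + (1/(2*t)) * (cmod (g x))\<^sup>2"
      by (simp only: norm_mult complex_mod_cnj) (rule amgm_t[OF t])
  qed
  also have "\<dots> = (\<Sum>\<^sub>\<infinity>x. t/2 * (cmod (f x))\<^sup>2) + (\<Sum>\<^sub>\<infinity>x. (1/(2*t)) * (cmod (g x))\<^sup>2)"
    by (rule infsum_add) (intro summable_on_cmult_right sf sg)+
  also have "\<dots> = t/2 * (l2norm f)\<^sup>2 + (1/(2*t)) * (l2norm g)\<^sup>2"
    by (simp only: infsum_cmult_right' l2norm_sq)
  also have "\<dots> = l2norm f * l2norm g"
    using pf pg by (simp add: t_def field_simps power2_eq_square)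
  finally show ?thesis .
qed

lemma l2inner_scale_left: "l2inner (\<lambda>z. c * u z) g = c * l2inner u g"
  unfolding l2inner_def by (simp add: mult.assoc infsum_cmult_right')

lemma l2inner_cnj: "cnj (l2inner u g) = l2inner g u"
proof -
  have "cnj (l2inner u g) = (\<Sum>\<^sub>\<infinity>x. cnj (u x * cnj (g x)))"
    unfolding l2inner_def by (rule infsum_cnj[symmetric])
  also have "\<dots> = l2inner g u" unfolding l2inner_def by (simp add: mult.commute)
  finally show ?thesis .
qed

lemma l2inner_delta_left: "l2inner (delta y) h = cnj (h y)"
  unfolding l2inner_def by (subst infsum_single[where y=y]) (auto simp: delta_def)

lemma l2inner_single_right: "l2inner f (\<lambda>z. if z = x then c else 0) = f x * cnj c"
  unfolding l2inner_def by (subst infsum_single[where y=x]) auto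

lemma l2inner_self:
  assumes "u \<in> l2"
  shows "l2inner u u = complex_of_real ((l2norm u)\<^sup>2)"
proof -
  have s: "(\<lambda>x. (cmod (u x))\<^sup>2) summable_on UNIV" using assms by (simp add: l2_def)
  have "l2inner u u = (\<Sum>\<^sub>\<infinity>x. complex_of_real ((cmod (u x))\<^sup>2))"
    unfolding l2inner_def by (rule infsum_cong) (metis complex_norm_square)
  also have "\<dots> = complex_of_real (\<Sum>\<^sub>\<infinity>x. (cmod (u x))\<^sup>2)"
    by (rule infsumI[OF has_sum_of_real[OF has_sum_infsum[OF s]]])
  finally show ?thesis by (simp add: l2norm_sq)
qed

lemma l2inner_add_right:
  assumes "f \<in> l2" "u \<in> l2" "w \<in> l2"
  shows "l2inner f (\<lambda>z. u z + w z) = l2inner f u + l2inner f w"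
  unfolding l2inner_def
  by (simp add: distrib_left infsum_add l2_prod_summable[OF assms(1,2)] l2_prod_summable[OF assms(1,3)])

section \<open>Bounded operators\<close>

lemma bop_l2: "bop T \<Longrightarrow> f \<in> l2 \<Longrightarrow> T f \<in> l2"
  by (simp add: bop_def)

lemma bop_out: "bop T \<Longrightarrow> f \<notin> l2 \<Longrightarrow> T f = (\<lambda>_. 0)"
  by (simp add: bop_def)

lemma bop_lin: "bop T \<Longrightarrow> f \<in> l2 \<Longrightarrow> g \<in> l2 \<Longrightarrow> T (\<lambda>x. f x + c * g x) = (\<lambda>x. T f x + c * T g x)"
  by (simp add: bop_def)

lemma bop_zero:
  assumes "bop T" shows "T (\<lambda>_. 0) = (\<lambda>_. 0)"
proof -
  have "T (\<lambda>x. (\<lambda>_. 0) x + 1 * (\<lambda>_. 0) x) = (\<lambda>x. T (\<lambda>_. 0) x + 1 * T (\<lambda>_. 0) x)"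
    by (rule bop_lin[OF assms]) auto
  hence "T (\<lambda>_. 0) = (\<lambda>x. T (\<lambda>_. 0) x + T (\<lambda>_. 0) x)" by simp
  thus ?thesis by (metis (no_types) add_cancel_right_right)
qed

lemma bop_scale:
  assumes "bop T" "f \<in> l2" shows "T (\<lambda>x. c * f x) = (\<lambda>x. c * T f x)"
  using bop_lin[OF assms(1) l2_zero assms(2), of c] bop_zero[OF assms(1)] by simp

lemma bop_add:
  assumes "bop T" "f \<in> l2" "g \<in> l2" shows "T (\<lambda>x. f x + g x) = (\<lambda>x. T f x + T g x)"
  using bop_lin[OF assms, of 1] by simp

lemma l2_sum:
  assumes "finite S" "\<And>y. y \<in> S \<Longrightarrow> g y \<in> l2"
  shows "(\<lambda>z. \<Sum>y\<in>S. a y * g y z) \<in> l2"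
  using assms
proof (induction S rule: finite_induct)
  case empty then show ?case by simp
next
  case (insert y S)
  have "(\<lambda>z. (\<Sum>y\<in>S. a y * g y z) + a y * g y z) \<in> l2"
    by (rule l2_lincomb(1)) (use insert in auto)
  thus ?case using insert by (simp add: add.commute)
qed

lemma bop_sum:
  assumes "bop T" "finite S" "\<And>y. y \<in> S \<Longrightarrow> g y \<in> l2"
  shows "T (\<lambda>z. \<Sum>y\<in>S. a y * g y z) = (\<lambda>z. \<Sum>y\<in>S. a y * T (g y) z)"
  using assms(2,3)
proof (induction S rule: finite_induct)
  case empty then show ?case using bop_zero[OF assms(1)] by simp
next
  case (insert y S)
  have l: "(\<lambda>z. \<Sum>y\<in>S. a y * g y z) \<in> l2" by (rule l2_sum) (use insert in auto)
  have "T (\<lambda>z. \<Sum>y\<in>insert y S. a y * g y z) = T (\<lambda>z. (\<Sum>y\<in>S. a y * g y z) + a y * g y z)"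
    using insert by (simp add: add.commute)
  also have "\<dots> = (\<lambda>z. T (\<lambda>z. \<Sum>y\<in>S. a y * g y z) z + a y * T (g y) z)"
    by (rule bop_lin[OF assms(1) l]) (use insert in auto)
  also have "\<dots> = (\<lambda>z. \<Sum>y\<in>insert y S. a y * T (g y) z)"
    using insert by (simp add: add.commute)
  finally show ?case .
qed

lemma bop_bound:
  assumes "bop T" shows "\<exists>K\<ge>0. \<forall>f\<in>l2. l2norm (T f) \<le> K * l2norm f"
proof -
  obtain K where K: "\<forall>f\<in>l2. l2norm (T f) \<le> K * l2norm f" using assms by (auto simp: bop_def)
  have "l2norm (T f) \<le> max K 0 * l2norm f" if "f \<in> l2" for f
    using K that by (meson max.cobounded1 mult_right_mono l2norm_nonneg order_trans)
  moreover have "0 \<le> max K 0" by simp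
  ultimately show ?thesis by blast
qed

lemma op_norm_bdd:
  assumes "bop T" shows "bdd_above ((\<lambda>f. l2norm (T f)) ` {f\<in>l2. l2norm f \<le> 1})"
proof -
  obtain K where K: "K \<ge> 0" "\<And>f. f \<in> l2 \<Longrightarrow> l2norm (T f) \<le> K * l2norm f" using bop_bound[OF assms] by auto
  have "l2norm (T f) \<le> K" if "f \<in> l2" "l2norm f \<le> 1" for f
    using K(2)[OF that(1)] mult_left_mono[OF that(2) K(1)] by simp
  thus ?thesis by (auto intro!: bdd_aboveI)
qed

lemma op_norm_upper:
  assumes "bop T" "f \<in> l2" "l2norm f \<le> 1" shows "l2norm (T f) \<le> op_norm T"
  unfolding op_norm_def by (rule cSup_upper[OF _ op_norm_bdd[OF assms(1)]]) (use assms in auto)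

lemma op_norm_nonneg: "bop T \<Longrightarrow> 0 \<le> op_norm T"
  using op_norm_upper[of T "\<lambda>_. 0"] bop_zero[of T] by simp

lemma op_norm_le:
  assumes "\<And>f. f \<in> l2 \<Longrightarrow> l2norm f \<le> 1 \<Longrightarrow> l2norm (T f) \<le> C"
  shows "op_norm T \<le> C"
  unfolding op_norm_def
proof (rule cSup_least)
  show "(\<lambda>f. l2norm (T f)) ` {f \<in> l2. l2norm f \<le> 1} \<noteq> {}"
    using l2_zero by (auto intro!: exI[of _ "\<lambda>_. 0"])
qed (use assms in auto)

lemma op_norm_bound:
  assumes "bop T" "f \<in> l2" shows "l2norm (T f) \<le> op_norm T * l2norm f"
proof (cases "l2norm f = 0")
  case True
  then show ?thesis using l2norm_eq0[OF assms(2)] bop_zero[OF assms(1)] by simp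
next
  case False
  hence p: "l2norm f > 0" using l2norm_nonneg[of f] by simp
  define c where "c = complex_of_real (1 / l2norm f)"
  have g: "(\<lambda>x. c * f x) \<in> l2" using l2_scale[OF assms(2)] by blast
  have ng: "l2norm (\<lambda>x. c * f x) = 1" using l2_scale(2)[OF assms(2), of c] p by (simp add: c_def norm_divide)
  have "l2norm (T (\<lambda>x. c * f x)) \<le> op_norm T" by (rule op_norm_upper[OF assms(1) g]) (simp add: ng)
  moreover have "l2norm (T (\<lambda>x. c * f x)) = l2norm (T f) / l2norm f"
  proof -
    have "T (\<lambda>x. c * f x) = (\<lambda>x. c * T f x)" by (rule bop_scale[OF assms])
    moreover have "l2norm (\<lambda>x. c * T f x) = cmod c * l2norm (T f)" by (rule l2_scale(2)[OF bop_l2[OF assms]])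
    moreover have "cmod c = 1 / l2norm f" using p by (simp add: c_def norm_divide)
    ultimately show ?thesis by simp
  qed
  ultimately show ?thesis using p by (simp add: divide_le_eq)
qed

lemma point_le_op:
  assumes "bop T" "f \<in> l2" shows "cmod (T f z) \<le> op_norm T * l2norm f"
  using l2_point[OF bop_l2[OF assms], of z] op_norm_bound[OF assms] by linarith

lemma bop_lincomb:
  assumes "bop S" "bop T" shows "bop (\<lambda>f x. S f x + c * T f x)"
proof -
  obtain K1 where K1: "K1 \<ge> 0" "\<And>f. f \<in> l2 \<Longrightarrow> l2norm (S f) \<le> K1 * l2norm f" using bop_bound[OF assms(1)] by auto
  obtain K2 where K2: "K2 \<ge> 0" "\<And>f. f \<in> l2 \<Longrightarrow> l2norm (T f) \<le> K2 * l2norm f" using bop_bound[OF assms(2)] by auto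
  have b: "l2norm (\<lambda>x. S f x + c * T f x) \<le> (2 * (K1 + cmod c * K2)) * l2norm f" if "f \<in> l2" for f
  proof -
    have "l2norm (\<lambda>x. S f x + c * T f x) \<le> 2 * (l2norm (S f) + cmod c * l2norm (T f))"
      by (rule l2_lincomb(2)) (use that assms in \<open>auto intro: bop_l2\<close>)
    also have "\<dots> \<le> 2 * (K1 * l2norm f + cmod c * (K2 * l2norm f))"
    proof -
      have "cmod c * l2norm (T f) \<le> cmod c * (K2 * l2norm f)"
        by (rule mult_left_mono) (use K2(2)[OF that] in auto)
      thus ?thesis using K1(2)[OF that] by (intro mult_left_mono) linarith+
    qed
    finally show ?thesis by (simp add: algebra_simps)
  qed
  show ?thesis
    unfolding bop_def
  proof (intro conjI allI ballI impI)
    fix f :: "'a \<Rightarrow> complex" assume "f \<notin> l2"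
    thus "(\<lambda>x. S f x + c * T f x) = (\<lambda>_. 0)" using assms by (simp add: bop_out)
  next
    fix f :: "'a \<Rightarrow> complex" assume "f \<in> l2"
    thus "(\<lambda>x. S f x + c * T f x) \<in> l2" using assms by (intro l2_lincomb(1)) (auto intro: bop_l2)
  next
    fix f g :: "'a \<Rightarrow> complex" and d assume "f \<in> l2" "g \<in> l2"
    thus "(\<lambda>x. S (\<lambda>x. f x + d * g x) x + c * T (\<lambda>x. f x + d * g x) x) =
          (\<lambda>x. (S f x + c * T f x) + d * (S g x + c * T g x))"
    proof -
      have 1: "S (\<lambda>x. f x + d * g x) = (\<lambda>x. S f x + d * S g x)" by (rule bop_lin) (use assms \<open>f \<in> l2\<close> \<open>g \<in> l2\<close> in auto)
      have 2: "T (\<lambda>x. f x + d * g x) = (\<lambda>x. T f x + d * T g x)" by (rule bop_lin) (use assms \<open>f \<in> l2\<close> \<open>g \<in> l2\<close> in auto)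
      show ?thesis unfolding 1 2 by (rule ext) (simp add: distrib_left add_ac mult_ac)
    qed
  next
    show "\<exists>K. \<forall>f\<in>l2. l2norm (\<lambda>x. S f x + c * T f x) \<le> K * l2norm f"
      by (rule exI[of _ "2 * (K1 + cmod c * K2)"]) (use b in auto)
  qed
qed



definition Z0 :: "'a op" where "Z0 = (\<lambda>f x. 0)"

definition rk1 :: "('a \<Rightarrow> complex) \<Rightarrow> 'a \<Rightarrow> 'a op" where
  "rk1 u x = (\<lambda>g. if g \<in> l2 then (\<lambda>z. g x * u z) else (\<lambda>_. 0))"

definition rk1' :: "'a \<Rightarrow> ('a \<Rightarrow> complex) \<Rightarrow> 'a op" where
  "rk1' x u = (\<lambda>g. if g \<in> l2 then (\<lambda>z. if z = x then l2inner g u else 0) else (\<lambda>_. 0))"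

lemma delta_l2'[simp]: "(\<lambda>y. if y = x then 1 else 0) \<in> l2"
  using delta_l2[of x] by (simp add: delta_def)

lemma bopI:
  assumes "\<And>f. f \<notin> l2 \<Longrightarrow> T f = (\<lambda>_. 0)" "\<And>f. f \<in> l2 \<Longrightarrow> T f \<in> l2"
    "\<And>f g c. f \<in> l2 \<Longrightarrow> g \<in> l2 \<Longrightarrow> T (\<lambda>x. f x + c * g x) = (\<lambda>x. T f x + c * T g x)"
    "\<And>f. f \<in> l2 \<Longrightarrow> l2norm (T f) \<le> K * l2norm f"
  shows "bop T"
  unfolding bop_def using assms by blast

lemma bop_Z0: "bop Z0"
  by (rule bopI[where K=0]) (auto simp: Z0_def)

lemma op_norm_Z0: "op_norm (Z0 :: 'a op) = 0"
proof -
  have "op_norm (Z0 :: 'a op) \<le> 0" by (rule op_norm_le) (simp add: Z0_def)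
  thus ?thesis using op_norm_nonneg[OF bop_Z0, where 'a='a] by linarith
qed

lemma op_diff_self: "op_diff T T = Z0"
  by (simp add: op_diff_def Z0_def)

lemma uroe_self:
  fixes T :: "('a::metric_space) op"
  assumes "bop T" "propg_le T k" shows "T \<in> uroe"
  unfolding uroe_def using assms by (auto simp: op_diff_self op_norm_Z0)

lemma uroe_bop: "T \<in> uroe \<Longrightarrow> bop T"
  by (simp add: uroe_def)

lemma propg_Z0: "propg_le Z0 0"
  by (simp add: propg_le_def entry_def Z0_def)

lemma Z0_uroe: "(Z0 :: ('a::metric_space) op) \<in> uroe"
  using uroe_self[OF bop_Z0 propg_Z0] .

subsection \<open>Multiplication operators\<close>

lemma mult_op_apply: "f \<in> l2 \<Longrightarrow> mult_op h f = (\<lambda>x. h x * f x)"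
  by (simp add: mult_op_def)

lemma bop_mult_op:
  assumes "bounded (range h)" shows "bop (mult_op h)"
proof -
  obtain B where B: "\<And>x. cmod (h x) \<le> B" using assms unfolding bounded_iff by auto
  have b: "(\<lambda>x. h x * f x) \<in> l2 \<and> l2norm (\<lambda>x. h x * f x) \<le> cmod (of_real B) * l2norm f" if "f \<in> l2" for f
  proof -
    have le: "cmod (h x * f x) \<le> cmod (of_real B * f x)" for x
      using B[of x] by (simp add: norm_mult mult_right_mono)
    show ?thesis using l2_mono[OF l2_scale(1)[OF that] le] l2_scale(2)[OF that] by simp
  qed
  show ?thesis
  proof (rule bopI[where K="cmod (of_real B)"])
    fix f :: "'a \<Rightarrow> complex" assume f: "f \<in> l2"
    show "mult_op h f \<in> l2" "l2norm (mult_op h f) \<le> cmod (of_real B) * l2norm f"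
      using b[OF f] f by (simp_all only: mult_op_apply)
  next
    fix f g :: "'a \<Rightarrow> complex" and c assume fg: "f \<in> l2" "g \<in> l2"
    have "(\<lambda>x. f x + c * g x) \<in> l2" by (rule l2_lincomb(1)[OF fg])
    thus "mult_op h (\<lambda>x. f x + c * g x) = (\<lambda>x. mult_op h f x + c * mult_op h g x)"
      using fg by (simp add: mult_op_def distrib_left mult.left_commute)
  qed (simp add: mult_op_def)
qed

lemma mult_op_delta: "mult_op h (delta y) y = h y"
  by (simp add: mult_op_def delta_def)

lemma propg_mult_op: "propg_le (mult_op h) 0"
  by (auto simp: propg_le_def entry_def mult_op_def delta_def)

lemma mult_op_uroe: "bounded (range h) \<Longrightarrow> (mult_op h :: ('a::metric_space) op) \<in> uroe"
  using uroe_self[OF bop_mult_op propg_mult_op] .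

lemma bounded_delta: "bounded (range (delta x))"
  by (rule finite_imp_bounded, rule finite_subset[of _ "{0,1}"]) (auto simp: delta_def)

lemma bounded_indicator: "bounded (range (\<lambda>x. if x \<in> A then (1::complex) else 0))"
  by (rule finite_imp_bounded, rule finite_subset[of _ "{0,1}"]) auto

lemma exy_mult: "exy x x = mult_op (delta x)"
  by (auto simp: exy_def mult_op_def delta_def fun_eq_iff)

lemma exy_uroe_diag: "(exy x x :: ('a::metric_space) op) \<in> uroe"
  unfolding exy_mult by (rule mult_op_uroe[OF bounded_delta])

lemma exy_linf: "exy x x \<in> linf"
  unfolding linf_def exy_mult by (rule CollectI, rule exI[of _ "delta x"]) (simp add: bounded_delta)

lemma chi_uroe: "(chi A :: ('a::metric_space) op) \<in> uroe"
  unfolding chi_def by (rule mult_op_uroe[OF bounded_indicator])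

lemma linf_uroe: "(linf :: ('a::metric_space) op set) \<subseteq> uroe"
  unfolding linf_def using mult_op_uroe by blast

lemma bop_mult_op_l2:
  assumes "bounded (range h)" "f \<in> l2" shows "(\<lambda>x. h x * f x) \<in> l2"
proof -
  have "mult_op h f \<in> l2" by (rule bop_l2[OF bop_mult_op[OF assms(1)] assms(2)])
  thus ?thesis by (simp only: mult_op_apply[OF assms(2)])
qed

lemma mult_op_comp:
  assumes "bounded (range h')" shows "mult_op h \<circ> mult_op h' = mult_op (\<lambda>x. h x * h' x)"
  using bop_mult_op_l2[OF assms] by (auto simp: mult_op_def fun_eq_iff mult.assoc)

subsection \<open>Rank one operators\<close>

lemma rk1_apply: "g \<in> l2 \<Longrightarrow> rk1 u x g = (\<lambda>z. g x * u z)"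
  by (simp add: rk1_def)

lemma rk1_delta: "rk1 u x (delta x) = u"
  by (simp add: rk1_def delta_def)

lemma bop_rk1:
  assumes "u \<in> l2" shows "bop (rk1 u x)"
proof -
  have b: "l2norm (\<lambda>z. g x * u z) \<le> l2norm u * l2norm g" if "g \<in> l2" for g
  proof -
    have "l2norm (\<lambda>z. g x * u z) = cmod (g x) * l2norm u" by (rule l2_scale(2)[OF assms])
    also have "\<dots> \<le> l2norm g * l2norm u"
      by (rule mult_right_mono[OF l2_point[OF that] l2norm_nonneg])
    finally show ?thesis by (simp add: mult.commute)
  qed
  show ?thesis
  proof (rule bopI[where K="l2norm u"])
    fix f :: "'a \<Rightarrow> complex" assume f: "f \<in> l2"
    show "rk1 u x f \<in> l2" "l2norm (rk1 u x f) \<le> l2norm u * l2norm f"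
      using b[OF f] l2_scale(1)[OF assms, of "f x"] f by (simp_all only: rk1_apply)
  next
    fix f g :: "'a \<Rightarrow> complex" and c assume fg: "f \<in> l2" "g \<in> l2"
    have "(\<lambda>x. f x + c * g x) \<in> l2" by (rule l2_lincomb(1)[OF fg])
    thus "rk1 u x (\<lambda>x. f x + c * g x) = (\<lambda>z. rk1 u x f z + c * rk1 u x g z)"
      using fg by (simp add: rk1_def distrib_right mult.assoc)
  qed (simp add: rk1_def)
qed

lemma op_norm_rk1:
  assumes "u \<in> l2" shows "op_norm (rk1 u x) \<le> l2norm u"
proof (rule op_norm_le)
  fix g :: "'a \<Rightarrow> complex" assume g: "g \<in> l2" "l2norm g \<le> 1"
  have "l2norm (rk1 u x g) = cmod (g x) * l2norm u" using l2_scale(2)[OF assms, of "g x"] g by (simp add: rk1_def)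
  also have "\<dots> \<le> 1 * l2norm u"
    using l2_point[OF g(1), of x] g(2) l2norm_nonneg[of u] by (intro mult_right_mono) auto
  finally show "l2norm (rk1 u x g) \<le> l2norm u" by simp
qed

lemma l2inner_lin_left:
  assumes "f \<in> l2" "g \<in> l2" "u \<in> l2"
  shows "l2inner (\<lambda>z. f z + c * g z) u = l2inner f u + c * l2inner g u"
proof -
  have "l2inner (\<lambda>z. f z + c * g z) u = (\<Sum>\<^sub>\<infinity>z. f z * cnj (u z) + c * (g z * cnj (u z)))"
    unfolding l2inner_def by (rule infsum_cong) (simp add: algebra_simps)
  also have "\<dots> = l2inner f u + (\<Sum>\<^sub>\<infinity>z. c * (g z * cnj (u z)))"
    unfolding l2inner_def
    by (rule infsum_add) (use l2_prod_summable[OF assms(1,3)] l2_prod_summable[OF assms(2,3)] in \<open>auto intro: summable_on_cmult_right\<close>)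
  also have "\<dots> = l2inner f u + c * l2inner g u"
    unfolding l2inner_def by (simp only: infsum_cmult_right')
  finally show ?thesis .
qed

lemma single_l2: "(\<lambda>z. if z = x then c else 0) \<in> l2"
  by (rule l2_finite_support[of "{x}"]) auto

lemma l2norm_single': "l2norm (\<lambda>z. if z = x then c else 0) = cmod c"
  by (subst l2norm_single[where y=x]) auto

lemma bop_rk1':
  assumes "u \<in> l2" shows "bop (rk1' x u)"
proof -
  have b: "l2norm (\<lambda>z. if z = x then l2inner g u else 0) \<le> l2norm u * l2norm g" if "g \<in> l2" for g
    using l2inner_CS[OF that assms] by (simp add: l2norm_single' mult.commute)
  have lin: "(\<lambda>z. if z = x then l2inner (\<lambda>x. f x + c * g x) u else 0) =
     (\<lambda>z. (if z = x then l2inner f u else 0) + c * (if z = x then l2inner g u else 0))"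
    if "f \<in> l2" "g \<in> l2" for f g c
    using l2inner_lin_left[OF that assms] by auto
  show ?thesis
  proof (rule bopI[where K="l2norm u"])
    fix f :: "'a \<Rightarrow> complex" assume f: "f \<in> l2"
    show "rk1' x u f \<in> l2" "l2norm (rk1' x u f) \<le> l2norm u * l2norm f"
      using b[OF f] f by (simp_all add: rk1'_def single_l2)
  next
    fix f g :: "'a \<Rightarrow> complex" and c assume fg: "f \<in> l2" "g \<in> l2"
    have "(\<lambda>x. f x + c * g x) \<in> l2" by (rule l2_lincomb(1)[OF fg])
    thus "rk1' x u (\<lambda>x. f x + c * g x) = (\<lambda>z. rk1' x u f z + c * rk1' x u g z)"
      using fg lin[OF fg, of c] by (simp add: rk1'_def)
  qed (simp add: rk1'_def)
qed

lemma op_norm_rk1':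
  assumes "u \<in> l2" shows "op_norm (rk1' x u) \<le> l2norm u"
proof (rule op_norm_le)
  fix g :: "'a \<Rightarrow> complex" assume g: "g \<in> l2" "l2norm g \<le> 1"
  have "l2norm (rk1' x u g) = cmod (l2inner g u)" using g by (simp add: rk1'_def l2norm_single')
  also have "\<dots> \<le> l2norm g * l2norm u" by (rule l2inner_CS[OF g(1) assms])
  also have "\<dots> \<le> 1 * l2norm u" using g(2) l2norm_nonneg[of u] by (intro mult_right_mono) auto
  finally show "l2norm (rk1' x u g) \<le> l2norm u" by simp
qed

lemma entry_rk1: "entry (rk1 u x) a b = (if a = x then u b else 0)"
  by (simp add: entry_def rk1_def delta_def)

lemma entry_rk1': "entry (rk1' x u) a b = (if b = x then cnj (u a) else 0)"
proof -
  have "rk1' x u (delta a) = (\<lambda>z. if z = x then l2inner (delta a) u else 0)"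
    unfolding rk1'_def using delta_l2[of a] by (simp only: if_True)
  thus ?thesis unfolding entry_def by (simp only: l2inner_delta_left)
qed

lemma tail_head:
  assumes "u \<in> l2" "e > 0"
  obtains F where "finite F" "l2norm (\<lambda>z. if z \<in> F then 0 else u z) < e"
  using l2_tail[OF assms] by blast

lemma rk1_uroe:
  fixes u :: "('a::metric_space) \<Rightarrow> complex"
  assumes "u \<in> l2" shows "rk1 u x \<in> uroe"
  unfolding uroe_def
proof (intro CollectI conjI allI impI)
  show "bop (rk1 u x)" by (rule bop_rk1[OF assms])
  fix e :: real assume e: "e > 0"
  obtain F where F: "finite F" "l2norm (\<lambda>z. if z \<in> F then 0 else u z) < e"
    using tail_head[OF assms e] by blast
  define t where "t = (\<lambda>z. if z \<in> F then 0 else u z)"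
  define hd where "hd = (\<lambda>z. if z \<in> F then u z else 0)"
  have hd: "hd \<in> l2" by (rule l2_finite_support[OF F(1)]) (simp add: hd_def)
  have t: "t \<in> l2" using l2_mono(1)[OF assms, of t] by (simp add: t_def)
  have "propg_le (rk1 hd x) (\<Sum>y\<in>F. dist x y)"
    unfolding propg_le_def entry_rk1
  proof (intro allI impI)
    fix a b assume "(if a = x then hd b else 0) \<noteq> 0"
    hence "a = x" "b \<in> F" by (auto simp: hd_def split: if_splits)
    thus "dist a b \<le> (\<Sum>y\<in>F. dist x y)"
      using F(1) by (auto intro: member_le_sum)
  qed
  moreover have eq: "op_diff (rk1 u x) (rk1 hd x) = rk1 t x"
    by (auto simp: op_diff_def rk1_def t_def hd_def fun_eq_iff algebra_simps)
  moreover have "op_norm (rk1 t x) < e" using op_norm_rk1[OF t, of x] F(2) t_def by simp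
  hence "op_norm (op_diff (rk1 u x) (rk1 hd x)) < e" unfolding eq .
  ultimately show "\<exists>S. bop S \<and> (\<exists>k. propg_le S k) \<and> op_norm (op_diff (rk1 u x) S) < e"
    using bop_rk1[OF hd] by blast
qed

lemma rk1'_uroe:
  fixes u :: "('a::metric_space) \<Rightarrow> complex"
  assumes "u \<in> l2" shows "rk1' x u \<in> uroe"
  unfolding uroe_def
proof (intro CollectI conjI allI impI)
  show "bop (rk1' x u)" by (rule bop_rk1'[OF assms])
  fix e :: real assume e: "e > 0"
  obtain F where F: "finite F" "l2norm (\<lambda>z. if z \<in> F then 0 else u z) < e"
    using tail_head[OF assms e] by blast
  define t where "t = (\<lambda>z. if z \<in> F then 0 else u z)"
  define hd where "hd = (\<lambda>z. if z \<in> F then u z else 0)"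
  have hd: "hd \<in> l2" by (rule l2_finite_support[OF F(1)]) (simp add: hd_def)
  have t: "t \<in> l2" using l2_mono(1)[OF assms, of t] by (simp add: t_def)
  have "propg_le (rk1' x hd) (\<Sum>y\<in>F. dist x y)"
    unfolding propg_le_def entry_rk1'
  proof (intro allI impI)
    fix a b assume "(if b = x then cnj (hd a) else 0) \<noteq> 0"
    hence "b = x" "a \<in> F" by (auto simp: hd_def split: if_splits)
    thus "dist a b \<le> (\<Sum>y\<in>F. dist x y)"
      using F(1) by (auto intro: member_le_sum simp: dist_commute)
  qed
  moreover have eq: "op_diff (rk1' x u) (rk1' x hd) = rk1' x t"
  proof (rule ext)+
    fix g z
    show "op_diff (rk1' x u) (rk1' x hd) g z = rk1' x t g z"
    proof (cases "g \<in> l2")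
      case True
      have "u = (\<lambda>z. hd z + t z)" by (auto simp: hd_def t_def)
      hence "l2inner g u = l2inner g hd + l2inner g t" using l2inner_add_right[OF True hd t] by simp
      thus ?thesis using True by (simp add: op_diff_def rk1'_def)
    qed (simp add: op_diff_def rk1'_def)
  qed
  moreover have "op_norm (rk1' x t) < e" using op_norm_rk1'[OF t, of x] F(2) t_def by simp
  hence "op_norm (op_diff (rk1' x u) (rk1' x hd)) < e" unfolding eq .
  ultimately show "\<exists>S. bop S \<and> (\<exists>k. propg_le S k) \<and> op_norm (op_diff (rk1' x u) S) < e"
    using bop_rk1'[OF hd] by blast
qed

lemma adj_rk1:
  assumes "u \<in> l2" shows "adj (rk1 u x) = rk1' x u"
proof (rule ext)
  fix g :: "'a \<Rightarrow> complex"
  show "adj (rk1 u x) g = rk1' x u g"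
  proof (cases "g \<in> l2")
    case True
    define h0 where "h0 = (\<lambda>z. if z = x then l2inner g u else 0)"
    have P: "h0 \<in> l2 \<and> (\<forall>f\<in>l2. l2inner (rk1 u x f) g = l2inner f h0)"
    proof (intro conjI ballI)
      show "h0 \<in> l2" unfolding h0_def by (rule single_l2)
      fix f :: "'a \<Rightarrow> complex" assume f: "f \<in> l2"
      have "l2inner (rk1 u x f) g = f x * l2inner u g" using f by (simp add: rk1_def l2inner_scale_left)
      also have "\<dots> = l2inner f h0" unfolding h0_def l2inner_single_right by (simp add: l2inner_cnj)
      finally show "l2inner (rk1 u x f) g = l2inner f h0" .
    qed
    have U: "h = h0" if "h \<in> l2 \<and> (\<forall>f\<in>l2. l2inner (rk1 u x f) g = l2inner f h)" for h
    proof
      fix y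
      have a: "\<forall>f\<in>l2. l2inner (rk1 u x f) g = l2inner f h" using that by blast
      have b: "\<forall>f\<in>l2. l2inner (rk1 u x f) g = l2inner f h0" using P by blast
      have "l2inner (delta y) h = l2inner (delta y) h0"
        using a[rule_format, OF delta_l2] b[rule_format, OF delta_l2] by simp
      thus "h y = h0 y" by (simp add: l2inner_delta_left)
    qed
    have "adj (rk1 u x) g = h0"
    proof -
      have "(THE h. h \<in> l2 \<and> (\<forall>f\<in>l2. l2inner (rk1 u x f) g = l2inner f h)) = h0"
        apply (rule the_equality)
         apply (rule P)
        apply (erule U)
        done
      thus ?thesis unfolding adj_def using True by simp
    qed
    thus ?thesis using True by (simp add: rk1'_def h0_def)
  qed (simp add: adj_def rk1'_def)
qed

lemma exy_rk1: "exy x y = rk1 (delta y) x"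
  by (auto simp: exy_def rk1_def delta_def fun_eq_iff)

lemma bop_comp_exy: "bop T \<Longrightarrow> T \<circ> exy x x = rk1 (T (delta x)) x"
proof (rule ext)
  fix g assume T: "bop T"
  show "(T \<circ> exy x x) g = rk1 (T (delta x)) x g"
  proof (cases "g \<in> l2")
    case True
    have "exy x x g = (\<lambda>z. g x * delta x z)" using True by (auto simp: exy_def delta_def)
    thus ?thesis using True bop_scale[OF T delta_l2] by (simp add: rk1_def)
  qed (simp add: exy_def rk1_def bop_zero[OF T])
qed

lemma mult_op_comp_rk1:
  assumes "u \<in> l2" "bounded (range h)"
  shows "mult_op h \<circ> rk1 u x = rk1 (\<lambda>z. h z * u z) x"
proof (rule ext)
  fix g
  show "(mult_op h \<circ> rk1 u x) g = rk1 (\<lambda>z. h z * u z) x g"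
  proof (cases "g \<in> l2")
    case True
    have "(\<lambda>z. g x * u z) \<in> l2" using l2_scale(1)[OF assms(1)] .
    thus ?thesis using True by (simp add: rk1_def mult_op_def mult.left_commute)
  qed (simp add: rk1_def mult_op_def)
qed

lemma rk1'_zero: "rk1' x u (\<lambda>_. 0) = (\<lambda>_. 0)"
  unfolding rk1'_def l2inner_def by (simp add: fun_eq_iff)

lemma rk1'_comp_rk1:
  assumes "u \<in> l2"
  shows "rk1' x u \<circ> rk1 u x = op_scale (l2inner u u) (exy x x)"
proof (rule ext)
  fix g
  show "(rk1' x u \<circ> rk1 u x) g = op_scale (l2inner u u) (exy x x) g"
  proof (cases "g \<in> l2")
    case True
    have "(\<lambda>z. g x * u z) \<in> l2" using l2_scale(1)[OF assms(1)] .
    thus ?thesis using True by (simp add: rk1_def rk1'_def op_scale_def exy_def l2inner_scale_left fun_eq_iff)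
  next
    case False
    hence "rk1 u x g = (\<lambda>_. 0)" by (simp add: rk1_def)
    thus ?thesis using False by (simp add: rk1'_zero op_scale_def exy_def)
  qed
qed

lemma op_add_rk1: "op_add (rk1 v x) (rk1 w x) = rk1 (\<lambda>z. v z + w z) x"
proof (rule ext)+
  fix g z
  show "op_add (rk1 v x) (rk1 w x) g z = rk1 (\<lambda>z. v z + w z) x g z"
    by (cases "g \<in> l2") (simp_all add: op_add_def rk1_def distrib_left)
qed



section \<open>Band operators\<close>

definition band :: "real \<Rightarrow> ('a::metric_space) op" where
  "band r = (\<lambda>g. if g \<in> l2 then (\<lambda>z. \<Sum>y\<in>cball z r. g y) else (\<lambda>_. 0))"

lemma ulf_bound:
  assumes "unif_locally_finite TYPE('a::metric_space)"
  obtains N :: nat where "\<And>x::'a. finite (cball x r)" "\<And>x::'a. card (cball x r) \<le> N"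
  using assms unfolding unif_locally_finite_def by blast

lemma swap_card:
  fixes a :: "'a::metric_space \<Rightarrow> real"
  assumes fin: "\<And>x::'a. finite (cball x r)" and F: "finite F"
  shows "(\<Sum>z\<in>F. \<Sum>y\<in>cball z r. a y) = (\<Sum>y\<in>(\<Union>z\<in>F. cball z r). a y * card {z\<in>F. y \<in> cball z r})"
proof -
  define G where "G = (\<Union>z\<in>F. cball z r)"
  have G: "finite G" using F fin by (simp add: G_def)
  have "(\<Sum>z\<in>F. \<Sum>y\<in>cball z r. a y) = (\<Sum>z\<in>F. \<Sum>y\<in>{y\<in>G. y \<in> cball z r}. a y)"
  proof (rule sum.cong[OF refl])
    fix z assume "z \<in> F"
    hence "{y\<in>G. y \<in> cball z r} = cball z r" by (auto simp: G_def)
    thus "(\<Sum>y\<in>cball z r. a y) = (\<Sum>y\<in>{y\<in>G. y \<in> cball z r}. a y)" by simp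
  qed
  also have "\<dots> = (\<Sum>y\<in>G. \<Sum>z\<in>{z\<in>F. y \<in> cball z r}. a y)"
    by (rule sum.swap_restrict[OF F G])
  also have "\<dots> = (\<Sum>y\<in>G. a y * card {z\<in>F. y \<in> cball z r})"
    by (simp add: mult.commute)
  finally show ?thesis by (simp add: G_def)
qed

lemma band_bound:
  fixes g :: "'a::metric_space \<Rightarrow> complex"
  assumes fin: "\<And>x::'a. finite (cball x r)" and cN: "\<And>x::'a. card (cball x r) \<le> N"
    and g: "g \<in> l2"
  shows "(\<lambda>z. \<Sum>y\<in>cball z r. g y) \<in> l2 \<and> l2norm (\<lambda>z. \<Sum>y\<in>cball z r. g y) \<le> real N * l2norm g"
proof -
  define a where "a = (\<lambda>y. (cmod (g y))\<^sup>2)"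
  have ia: "infsum a UNIV = (l2norm g)\<^sup>2" by (simp add: l2norm_sq a_def)
  have a0: "a y \<ge> 0" for y by (simp add: a_def)
  have sa: "a summable_on UNIV" using g unfolding a_def by (simp add: l2_def)
  define \<phi> where "\<phi> z = real N * (\<Sum>y\<in>cball z r. a y)" for z
  have ph0: "\<phi> z \<ge> 0" for z by (simp add: \<phi>_def a0 sum_nonneg)
  have fs: "sum \<phi> F \<le> (real N)\<^sup>2 * (l2norm g)\<^sup>2" if F: "finite F" for F
  proof -
    define G where "G = (\<Union>z\<in>F. cball z r)"
    have G: "finite G" using F fin by (simp add: G_def)
    have "(\<Sum>z\<in>F. \<Sum>y\<in>cball z r. a y) = (\<Sum>y\<in>G. a y * card {z\<in>F. y \<in> cball z r})"
      unfolding G_def by (rule swap_card[OF fin F])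
    also have "\<dots> \<le> (\<Sum>y\<in>G. a y * real N)"
    proof (rule sum_mono)
      fix y assume "y \<in> G"
      have "{z\<in>F. y \<in> cball z r} \<subseteq> cball y r" by (auto simp: dist_commute)
      hence "card {z\<in>F. y \<in> cball z r} \<le> card (cball y r)" by (rule card_mono[OF fin])
      hence "card {z\<in>F. y \<in> cball z r} \<le> N" using cN[of y] by linarith
      thus "a y * real (card {z\<in>F. y \<in> cball z r}) \<le> a y * real N"
        by (intro mult_left_mono a0) simp
    qed
    also have "\<dots> = (\<Sum>y\<in>G. real N * a y)" by (simp only: mult.commute)
    also have "\<dots> = real N * (\<Sum>y\<in>G. a y)" by (rule sum_distrib_left[symmetric])
    also have "\<dots> \<le> real N * (l2norm g)\<^sup>2"
    proof (rule mult_left_mono)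
      show "(\<Sum>y\<in>G. a y) \<le> (l2norm g)\<^sup>2"
        unfolding ia[symmetric] by (rule finite_sum_le_infsum[OF sa G]) (auto simp: a0)
    qed simp
    finally have X: "(\<Sum>z\<in>F. \<Sum>y\<in>cball z r. a y) \<le> real N * (l2norm g)\<^sup>2" .
    have "sum \<phi> F = real N * (\<Sum>z\<in>F. \<Sum>y\<in>cball z r. a y)"
      by (simp add: \<phi>_def sum_distrib_left)
    also have "\<dots> \<le> real N * (real N * (l2norm g)\<^sup>2)" by (rule mult_left_mono[OF X]) simp
    finally show ?thesis by (simp add: power2_eq_square mult.assoc)
  qed
  have sph: "\<phi> summable_on UNIV"
    by (rule nonneg_bdd_above_summable_on) (use ph0 fs in \<open>auto intro!: bdd_aboveI\<close>)
  have iph: "infsum \<phi> UNIV \<le> (real N)\<^sup>2 * (l2norm g)\<^sup>2"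
    by (rule infsum_le_finite_sums[OF sph fs]) 
  have pt: "(cmod (\<Sum>y\<in>cball z r. g y))\<^sup>2 \<le> \<phi> z" for z
  proof -
    have "cmod (\<Sum>y\<in>cball z r. g y) \<le> (\<Sum>y\<in>cball z r. cmod (g y))" by (rule norm_sum)
    hence "(cmod (\<Sum>y\<in>cball z r. g y))\<^sup>2 \<le> (\<Sum>y\<in>cball z r. cmod (g y))\<^sup>2"
      by (rule power_mono) simp
    also have "\<dots> \<le> (\<Sum>y\<in>cball z r. (cmod (g y))\<^sup>2) * card (cball z r)"
      by (rule sum_squared_le_sum_of_squares)
    also have "\<dots> \<le> (\<Sum>y\<in>cball z r. (cmod (g y))\<^sup>2) * N"
      by (rule mult_left_mono) (use cN[of z] in \<open>auto intro: sum_nonneg\<close>)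
    finally show ?thesis by (simp add: \<phi>_def a_def mult.commute)
  qed
  have s: "(\<lambda>z. (cmod (\<Sum>y\<in>cball z r. g y))\<^sup>2) summable_on UNIV"
    by (rule summable_on_comparison_test[OF sph]) (use pt in auto)
  have "(l2norm (\<lambda>z. \<Sum>y\<in>cball z r. g y))\<^sup>2 \<le> infsum \<phi> UNIV"
    unfolding l2norm_sq by (rule infsum_mono[OF s sph]) (use pt in auto)
  also have "\<dots> \<le> (real N * l2norm g)\<^sup>2" using iph by (simp add: power_mult_distrib)
  finally have "l2norm (\<lambda>z. \<Sum>y\<in>cball z r. g y) \<le> real N * l2norm g"
    by (rule power2_le_imp_le) (simp add: l2norm_nonneg)
  moreover have "(\<lambda>z. \<Sum>y\<in>cball z r. g y) \<in> l2" using s by (simp add: l2_def)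
  ultimately show ?thesis by blast
qed

lemma band_bop:
  assumes ulf: "unif_locally_finite TYPE('a::metric_space)"
  shows "bop (band r :: 'a op)"
proof -
  obtain N :: nat where fin: "\<And>x::'a. finite (cball x r)" and cN: "\<And>x::'a. card (cball x r) \<le> N"
    using ulf_bound[OF ulf] by blast
  show ?thesis
  proof (rule bopI[where K="real N"])
    fix f :: "'a \<Rightarrow> complex" assume "f \<notin> l2" thus "band r f = (\<lambda>_. 0)" by (simp add: band_def)
  next
    fix f :: "'a \<Rightarrow> complex" assume f: "f \<in> l2"
    show "band r f \<in> l2" "l2norm (band r f) \<le> real N * l2norm f"
      using band_bound[OF fin cN f] f by (simp_all add: band_def)
  next
    fix f g :: "'a \<Rightarrow> complex" and c assume fg: "f \<in> l2" "g \<in> l2"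
    have "(\<lambda>x. f x + c * g x) \<in> l2" by (rule l2_lincomb(1)[OF fg])
    thus "band r (\<lambda>x. f x + c * g x) = (\<lambda>x. band r f x + c * band r g x)"
      using fg by (simp add: band_def sum.distrib sum_distrib_left)
  qed
qed

lemma band_apply: "g \<in> l2 \<Longrightarrow> band r g = (\<lambda>z. \<Sum>y\<in>cball z r. g y)"
  by (simp add: band_def)

lemma band_delta:
  assumes ulf: "unif_locally_finite TYPE('a::metric_space)"
  shows "band r (delta a) z = (if dist z (a::'a) \<le> r then 1 else 0)"
proof -
  obtain N :: nat where fin: "\<And>x::'a. finite (cball x r)"
    using ulf_bound[OF ulf] by blast
  have "band r (delta a) z = (\<Sum>y\<in>cball z r. if y = a then 1 else 0)"
    by (simp add: band_apply delta_def)
  also have "\<dots> = (if a \<in> cball z r then 1 else 0)"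
    using fin by simp
  finally show ?thesis by simp
qed

lemma band_propg:
  assumes ulf: "unif_locally_finite TYPE('a::metric_space)"
  shows "propg_le (band r :: 'a op) r"
  unfolding propg_le_def entry_def band_delta[OF ulf]
  by (auto simp: dist_commute split: if_splits)

lemma band_uroe:
  assumes ulf: "unif_locally_finite TYPE('a::metric_space)"
  shows "(band r :: 'a op) \<in> uroe"
  by (rule uroe_self[OF band_bop[OF ulf] band_propg[OF ulf]])



lemma bop_comp:
  assumes S: "bop S" and T: "bop T" shows "bop (S \<circ> T)"
proof -
  obtain K1 where K1: "K1 \<ge> 0" "\<And>f. f \<in> l2 \<Longrightarrow> l2norm (S f) \<le> K1 * l2norm f" using bop_bound[OF S] by auto
  obtain K2 where K2: "K2 \<ge> 0" "\<And>f. f \<in> l2 \<Longrightarrow> l2norm (T f) \<le> K2 * l2norm f" using bop_bound[OF T] by auto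
  show ?thesis
  proof (rule bopI[where K="K1 * K2"])
    fix f :: "'a \<Rightarrow> complex" assume "f \<notin> l2"
    thus "(S \<circ> T) f = (\<lambda>_. 0)" using bop_out[OF T] bop_zero[OF S] by simp
  next
    fix f :: "'a \<Rightarrow> complex" assume f: "f \<in> l2"
    have Tf: "T f \<in> l2" by (rule bop_l2[OF T f])
    show "(S \<circ> T) f \<in> l2" using bop_l2[OF S Tf] by simp
    have "l2norm (S (T f)) \<le> K1 * l2norm (T f)" by (rule K1(2)[OF Tf])
    also have "\<dots> \<le> K1 * (K2 * l2norm f)" by (rule mult_left_mono[OF K2(2)[OF f] K1(1)])
    finally show "l2norm ((S \<circ> T) f) \<le> K1 * K2 * l2norm f" by (simp add: mult.assoc)
  next
    fix f g :: "'a \<Rightarrow> complex" and c assume fg: "f \<in> l2" "g \<in> l2"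
    have "T (\<lambda>x. f x + c * g x) = (\<lambda>x. T f x + c * T g x)" by (rule bop_lin[OF T fg])
    moreover have "S (\<lambda>x. T f x + c * T g x) = (\<lambda>x. S (T f) x + c * S (T g) x)"
      by (rule bop_lin[OF S bop_l2[OF T fg(1)] bop_l2[OF T fg(2)]])
    ultimately show "(S \<circ> T) (\<lambda>x. f x + c * g x) = (\<lambda>x. (S \<circ> T) f x + c * (S \<circ> T) g x)" by simp
  qed
qed

lemma bop_op_diff:
  assumes "bop S" "bop T" shows "bop (op_diff S T)"
proof -
  have "op_diff S T = (\<lambda>f x. S f x + (-1) * T f x)" by (simp add: op_diff_def fun_eq_iff)
  thus ?thesis using bop_lincomb[OF assms, of "-1"] by simp
qed

lemma bop_op_sum:
  assumes "finite I" "\<And>i. i \<in> I \<Longrightarrow> bop (P i)" shows "bop (op_sum P I)"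
  using assms
proof (induction I rule: finite_induct)
  case empty
  have "op_sum P {} = Z0" by (simp add: op_sum_def Z0_def)
  then show ?case using bop_Z0 by simp
next
  case (insert i I)
  have "op_sum P (insert i I) = (\<lambda>f x. op_sum P I f x + 1 * P i f x)"
    using insert(1,2) by (simp add: op_sum_def fun_eq_iff add.commute)
  thus ?case using bop_lincomb[of "op_sum P I" "P i" 1] insert by simp
qed

lemma mult_op_zero: "mult_op (\<lambda>_. 0) = Z0"
  by (simp add: mult_op_def Z0_def fun_eq_iff)

lemma exy_idem: "exy y y \<circ> exy y y = exy y y"
proof -
  have "(\<lambda>z. delta y z * delta y z) = delta y" by (auto simp: delta_def fun_eq_iff)
  thus ?thesis by (simp add: exy_mult mult_op_comp[OF bounded_delta])
qed

lemma exy_comp_ne: "x \<noteq> x' \<Longrightarrow> exy x x \<circ> exy x' x' = Z0"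
proof -
  assume "x \<noteq> x'"
  hence "(\<lambda>z. delta x z * delta x' z) = (\<lambda>_. 0)" by (auto simp: delta_def fun_eq_iff)
  thus ?thesis by (simp add: exy_mult mult_op_comp[OF bounded_delta] mult_op_zero)
qed

lemma exy_delta: "exy y y (delta y) = delta y"
  by (auto simp: exy_def delta_def fun_eq_iff)

lemma exy_ne_Z0: "exy y y \<noteq> Z0"
proof
  assume "exy y y = Z0"
  hence "exy y y (delta y) y = Z0 (delta y) y" by simp
  thus False by (simp only: exy_delta) (simp add: Z0_def delta_def)
qed

lemma chi_idem: "chi Z \<circ> chi Z = chi Z"
proof -
  have "(\<lambda>x. (if x \<in> Z then (1::complex) else 0) * (if x \<in> Z then 1 else 0)) = (\<lambda>x. if x \<in> Z then 1 else 0)"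
    by (auto simp: fun_eq_iff)
  thus ?thesis unfolding chi_def by (simp add: mult_op_comp[OF bounded_indicator])
qed

lemma chi_comp_exy_out: "y \<notin> B \<Longrightarrow> chi B \<circ> exy y y = Z0"
proof -
  assume "y \<notin> B"
  hence "(\<lambda>z. (if z \<in> B then (1::complex) else 0) * delta y z) = (\<lambda>_. 0)" by (auto simp: delta_def fun_eq_iff)
  thus ?thesis unfolding chi_def exy_mult by (simp add: mult_op_comp[OF bounded_delta] mult_op_zero)
qed

lemma chi_linf: "chi B \<in> linf"
  unfolding linf_def chi_def
  by (rule CollectI, rule exI[of _ "\<lambda>x. if x \<in> B then 1 else 0"], rule conjI, rule refl, rule bounded_indicator)

lemma finite_expand:
  assumes "finite S" "\<And>z. z \<notin> S \<Longrightarrow> g z = 0"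
  shows "g = (\<lambda>z. \<Sum>y\<in>S. g y * delta y z)"
proof
  fix z
  have "(\<Sum>y\<in>S. g y * delta y z) = (\<Sum>y\<in>S. if y = z then g z else 0)"
    by (rule sum.cong) (auto simp: delta_def)
  also have "\<dots> = (if z \<in> S then g z else 0)" using assms(1) by simp
  also have "\<dots> = g z" using assms(2) by auto
  finally show "g z = (\<Sum>y\<in>S. g y * delta y z)" by simp
qed

section \<open>The embedding setup\<close>

locale emb_setup =
  fixes \<Phi> :: "('a::metric_space) op \<Rightarrow> ('b::metric_space) op"
  assumes emb: "embedding \<Phi>" and lin: "\<Phi> ` linf \<subseteq> linf"
    and rk: "\<forall>x::'a. rank_one (\<Phi> (exy x x))"
begin

lemma Phi_uroe: "T \<in> uroe \<Longrightarrow> \<Phi> T \<in> uroe"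
  using emb by (auto simp: embedding_def)

lemma Phi_bop: "T \<in> uroe \<Longrightarrow> bop (\<Phi> T)"
  using Phi_uroe uroe_bop by blast

lemma Phi_add: "S \<in> uroe \<Longrightarrow> T \<in> uroe \<Longrightarrow> \<Phi> (op_add S T) = op_add (\<Phi> S) (\<Phi> T)"
  using emb by (simp add: embedding_def)

lemma Phi_comp: "S \<in> uroe \<Longrightarrow> T \<in> uroe \<Longrightarrow> \<Phi> (S \<circ> T) = \<Phi> S \<circ> \<Phi> T"
  using emb by (simp add: embedding_def)

lemma Phi_scale: "T \<in> uroe \<Longrightarrow> \<Phi> (op_scale c T) = op_scale c (\<Phi> T)"
  using emb by (simp add: embedding_def)

lemma Phi_adj: "T \<in> uroe \<Longrightarrow> \<Phi> (adj T) = adj (\<Phi> T)"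
  using emb by (simp add: embedding_def)

lemma Phi_Z0: "\<Phi> Z0 = Z0"
proof -
  have "op_add Z0 Z0 = (Z0 :: 'a op)" by (simp add: op_add_def Z0_def)
  hence E: "\<Phi> Z0 = op_add (\<Phi> Z0) (\<Phi> Z0)" using Phi_add[OF Z0_uroe Z0_uroe] by simp
  have P: "\<Phi> Z0 f x = 0" for f x
  proof -
    have "\<Phi> Z0 f x = op_add (\<Phi> Z0) (\<Phi> Z0) f x" using E by (rule arg_cong[where f="\<lambda>T. T f x"])
    thus ?thesis by (simp add: op_add_def)
  qed
  show ?thesis
  proof (rule ext)+
    fix f x show "\<Phi> Z0 f x = Z0 f x" by (simp only: P) (simp add: Z0_def)
  qed
qed

lemma diag: "\<exists>y. \<Phi> (exy x x) = exy y y"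
proof -
  have "\<Phi> (exy x x) \<in> linf" by (rule subsetD[OF lin imageI[OF exy_linf]])
  hence "\<exists>h. \<Phi> (exy x x) = mult_op h \<and> bounded (range h)" by (simp add: linf_def)
  then obtain h where h: "\<Phi> (exy x x) = mult_op h" "bounded (range h)" by blast
  have "mult_op h \<circ> mult_op h = mult_op h"
    using Phi_comp[OF exy_uroe_diag exy_uroe_diag, of x x] h(1) by (simp add: exy_idem)
  hence M: "mult_op (\<lambda>z. h z * h z) = mult_op h" by (simp add: mult_op_comp[OF h(2)])
  have hh: "h y * h y = h y" for y
    using arg_cong[OF M, where f="\<lambda>T. T (delta y) y"] by (simp add: mult_op_delta)
  have "rank_one (\<Phi> (exy x x))" using rk by (rule spec)
  hence "rank_one (mult_op h)" by (simp only: h(1))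
  then obtain v where vv: "v \<noteq> (\<lambda>_. 0) \<and> mult_op h ` l2 = {(\<lambda>y. c * v y) | c. True}"
    unfolding rank_one_def by (rule exE)
  hence v: "v \<noteq> (\<lambda>_. 0)" "mult_op h ` l2 = {(\<lambda>y. c * v y) | c. True}" by (rule conjunct1, rule conjunct2)
  have img: "mult_op h (delta y) = (\<lambda>z. if z = y then h y else 0)" for y
    by (auto simp: mult_op_def delta_def fun_eq_iff)
  have in_img: "\<exists>c. (\<lambda>z. if z = y then h y else 0) = (\<lambda>z. c * v z)" for y
  proof -
    have "mult_op h (delta y) \<in> mult_op h ` l2" by simp
    thus ?thesis unfolding v(2) img by blast
  qed
  have ex: "\<exists>y. h y \<noteq> 0"
  proof (rule ccontr)
    assume "\<not> (\<exists>y. h y \<noteq> 0)"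
    hence h0: "h = (\<lambda>_. 0)" by auto
    have "mult_op h ` l2 \<subseteq> {\<lambda>_. 0}" by (auto simp: h0 mult_op_def)
    moreover have "(\<lambda>y. 1 * v y) \<in> mult_op h ` l2" unfolding v(2) by blast
    ultimately show False using v(1) by auto
  qed
  then obtain y where hy: "h y \<noteq> 0" by blast
  have hy1: "h y = 1" using hh[of y] hy by (metis mult_cancel_right2)
  have uniq: "h z = 0" if "z \<noteq> y" for z
  proof (rule ccontr)
    assume hz: "h z \<noteq> 0"
    obtain c1 where c1: "(\<lambda>w. if w = y then h y else 0) = (\<lambda>w. c1 * v w)" using in_img[of y] by blast
    obtain c2 where c2: "(\<lambda>w. if w = z then h z else 0) = (\<lambda>w. c2 * v w)" using in_img[of z] by blast
    have "h y = c1 * v y" using fun_cong[OF c1, of y] by simp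
    hence vy: "v y \<noteq> 0" using hy by auto
    have "0 = c2 * v y" using fun_cong[OF c2, of y] that by simp
    hence "c2 = 0" using vy by simp
    hence "h z = 0" using fun_cong[OF c2, of z] by simp
    thus False using hz by simp
  qed
  have "h = delta y" using hy1 uniq by (auto simp: delta_def fun_eq_iff)
  thus ?thesis using h(1) exy_mult by metis
qed

definition phi :: "'a \<Rightarrow> 'b" where "phi x = (SOME y. \<Phi> (exy x x) = exy y y)"

lemma Phi_diag: "\<Phi> (exy x x) = exy (phi x) (phi x)"
  unfolding phi_def by (rule someI_ex[OF diag])

lemma phi_inj: "inj phi"
proof (rule injI)
  fix x x' assume e: "phi x = phi x'"
  show "x = x'"
  proof (rule ccontr)
    assume "x \<noteq> x'"
    hence "\<Phi> (exy x x \<circ> exy x' x') = Z0" by (simp add: exy_comp_ne Phi_Z0)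
    moreover have "\<Phi> (exy x x \<circ> exy x' x') = exy (phi x) (phi x)"
      using Phi_comp[OF exy_uroe_diag exy_uroe_diag, of x x'] by (simp add: Phi_diag e exy_idem)
    ultimately show False using exy_ne_Z0 by metis
  qed
qed

lemma Phi_rk1_eq:
  assumes u: "u \<in> l2"
  shows "\<Phi> (rk1 u x) = rk1 (\<Phi> (rk1 u x) (delta (phi x))) (phi x)"
proof -
  have R: "rk1 u x \<in> uroe" by (rule rk1_uroe[OF u])
  have "rk1 u x \<circ> exy x x = rk1 u x" by (simp add: bop_comp_exy[OF bop_rk1[OF u]] rk1_delta)
  hence "\<Phi> (rk1 u x) = \<Phi> (rk1 u x) \<circ> exy (phi x) (phi x)"
    using Phi_comp[OF R exy_uroe_diag, of x] Phi_diag by simp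
  also have "\<dots> = rk1 (\<Phi> (rk1 u x) (delta (phi x))) (phi x)"
    by (rule bop_comp_exy[OF Phi_bop[OF R]])
  finally show ?thesis .
qed

lemma Phi_rk1_norm:
  assumes u: "u \<in> l2"
  shows "l2norm (\<Phi> (rk1 u x) (delta (phi x))) = l2norm u"
proof -
  have R: "rk1 u x \<in> uroe" by (rule rk1_uroe[OF u])
  define v where "v = \<Phi> (rk1 u x) (delta (phi x))"
  have v: "v \<in> l2" unfolding v_def by (rule bop_l2[OF Phi_bop[OF R] delta_l2])
  have PR: "\<Phi> (rk1 u x) = rk1 v (phi x)" unfolding v_def by (rule Phi_rk1_eq[OF u])
  have "\<Phi> (adj (rk1 u x) \<circ> rk1 u x) = \<Phi> (adj (rk1 u x)) \<circ> \<Phi> (rk1 u x)"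
    unfolding adj_rk1[OF u] by (rule Phi_comp[OF rk1'_uroe[OF u] R])
  also have "\<dots> = adj (\<Phi> (rk1 u x)) \<circ> \<Phi> (rk1 u x)" by (simp add: Phi_adj[OF R])
  also have "\<dots> = op_scale (l2inner v v) (exy (phi x) (phi x))"
    unfolding PR adj_rk1[OF v] by (rule rk1'_comp_rk1[OF v])
  finally have A: "\<Phi> (adj (rk1 u x) \<circ> rk1 u x) = op_scale (l2inner v v) (exy (phi x) (phi x))" .
  have B: "\<Phi> (adj (rk1 u x) \<circ> rk1 u x) = op_scale (l2inner u u) (exy (phi x) (phi x))"
    unfolding adj_rk1[OF u] rk1'_comp_rk1[OF u] by (simp add: Phi_scale[OF exy_uroe_diag] Phi_diag)
  have "op_scale (l2inner u u) (exy (phi x) (phi x)) (delta (phi x)) (phi x)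
      = op_scale (l2inner v v) (exy (phi x) (phi x)) (delta (phi x)) (phi x)"
    using A B by simp
  hence "l2inner u u = l2inner v v" by (simp only: op_scale_def exy_delta) (simp add: delta_def)
  hence "(l2norm u)\<^sup>2 = (l2norm v)\<^sup>2" using l2inner_self[OF u] l2inner_self[OF v] by (metis of_real_eq_iff)
  hence "l2norm u = l2norm v" using l2norm_nonneg[of u] l2norm_nonneg[of v] by (simp add: power2_eq_iff_nonneg)
  thus ?thesis by (simp add: v_def)
qed

lemma Phi_rk1_point:
  assumes u: "u \<in> l2"
  shows "cmod (\<Phi> (rk1 u x) (delta (phi x)) (phi y)) = cmod (u y)"
proof -
  define uy where "uy = (\<lambda>z. if z = y then u y else 0)"
  have uy: "uy \<in> l2" unfolding uy_def by (rule single_l2)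
  have "(\<lambda>z. delta y z * u z) = uy" by (auto simp: delta_def uy_def fun_eq_iff)
  hence C: "exy y y \<circ> rk1 u x = rk1 uy x"
    unfolding exy_mult by (simp add: mult_op_comp_rk1[OF u bounded_delta])
  have "\<Phi> (rk1 uy x) = exy (phi y) (phi y) \<circ> \<Phi> (rk1 u x)"
    using Phi_comp[OF exy_uroe_diag rk1_uroe[OF u], of y x] C Phi_diag by simp
  hence "\<Phi> (rk1 uy x) (delta (phi x)) = exy (phi y) (phi y) (\<Phi> (rk1 u x) (delta (phi x)))" by simp
  also have "\<dots> = (\<lambda>z. if z = phi y then \<Phi> (rk1 u x) (delta (phi x)) (phi y) else 0)"
    using bop_l2[OF Phi_bop[OF rk1_uroe[OF u]] delta_l2] by (simp add: exy_def)
  finally have E: "\<Phi> (rk1 uy x) (delta (phi x)) = (\<lambda>z. if z = phi y then \<Phi> (rk1 u x) (delta (phi x)) (phi y) else 0)" .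
  have "l2norm (\<Phi> (rk1 uy x) (delta (phi x))) = cmod (\<Phi> (rk1 u x) (delta (phi x)) (phi y))"
    unfolding E by (rule l2norm_single')
  moreover have "l2norm uy = cmod (u y)" unfolding uy_def by (rule l2norm_single')
  ultimately show ?thesis using Phi_rk1_norm[OF uy] by simp
qed

end



lemma chi_apply_delta: "chi Z (delta y) z = (if z = y \<and> y \<in> Z then 1 else 0)"
  by (simp add: chi_def mult_op_def delta_def)

lemma chi_idem_app: "chi Z (chi Z f) = chi Z f"
  using chi_idem[of Z] by (metis comp_apply)

context emb_setup begin

lemma opsum_diag: "op_sum (\<lambda>x. \<Phi> (exy x x)) G (delta y) z = (\<Sum>x\<in>G. if phi x = y \<and> z = y then 1 else 0)"
  unfolding op_sum_def Phi_diag by (rule sum.cong) (auto simp: exy_def delta_def)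

lemma Z_range:
  assumes S: "sot_sum (\<lambda>x. \<Phi> (exy x x)) (chi Z)"
  shows "Z = range phi"
proof -
  have key: "\<exists>F. finite F \<and> (\<forall>G. finite G \<and> F \<subseteq> G \<longrightarrow>
      l2norm (op_diff (chi Z) (op_sum (\<lambda>x. \<Phi> (exy x x)) G) (delta y)) < 1/2)" for y
  proof -
    have "\<forall>f\<in>l2. \<forall>e>0. \<exists>F. finite F \<and> (\<forall>G. finite G \<and> F \<subseteq> G \<longrightarrow>
      l2norm (op_diff (chi Z) (op_sum (\<lambda>x. \<Phi> (exy x x)) G) f) < e)"
      using S by (simp add: sot_sum_def)
    moreover have "(1/2::real) > 0" by simp
    ultimately show ?thesis using delta_l2[of y] by blast
  qed
  show ?thesis
  proof (rule set_eqI, rule iffI)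
    fix y assume yZ: "y \<in> Z"
    show "y \<in> range phi"
    proof (rule ccontr)
      assume ny: "y \<notin> range phi"
      obtain F where F: "finite F" "\<forall>G. finite G \<and> F \<subseteq> G \<longrightarrow>
          l2norm (op_diff (chi Z) (op_sum (\<lambda>x. \<Phi> (exy x x)) G) (delta y)) < 1/2"
        using key[of y] by blast
      have "op_diff (chi Z) (op_sum (\<lambda>x. \<Phi> (exy x x)) F) (delta y) = (\<lambda>z. if z = y then 1 else 0)"
      proof (rule ext)
        fix z
        have "(\<Sum>x\<in>F. if phi x = y \<and> z = y then 1 else (0::complex)) = 0"
          using ny by (intro sum.neutral) auto
        thus "op_diff (chi Z) (op_sum (\<lambda>x. \<Phi> (exy x x)) F) (delta y) z = (if z = y then 1 else 0)"
          using yZ by (simp add: op_diff_def opsum_diag chi_apply_delta)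
      qed
      hence "l2norm (op_diff (chi Z) (op_sum (\<lambda>x. \<Phi> (exy x x)) F) (delta y)) = 1"
        by (simp add: l2norm_single')
      thus False using F by auto
    qed
  next
    fix y assume "y \<in> range phi"
    then obtain x0 where y: "y = phi x0" by blast
    obtain F where F: "finite F" "\<forall>G. finite G \<and> F \<subseteq> G \<longrightarrow>
        l2norm (op_diff (chi Z) (op_sum (\<lambda>x. \<Phi> (exy x x)) G) (delta y)) < 1/2"
      using key[of y] by blast
    define G where "G = insert x0 F"
    have G: "finite G" "F \<subseteq> G" "x0 \<in> G" using F(1) by (auto simp: G_def)
    have "op_diff (chi Z) (op_sum (\<lambda>x. \<Phi> (exy x x)) G) (delta y) =
          (\<lambda>z. if z = y then (if y \<in> Z then 1 else 0) - 1 else 0)"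
    proof (rule ext)
      fix z
      have "(\<Sum>x\<in>G. if phi x = y \<and> z = y then 1 else (0::complex)) =
            (\<Sum>x\<in>G. if x = x0 then (if z = y then 1 else 0) else 0)"
        using inj_eq[OF phi_inj] y by (intro sum.cong) auto
      also have "\<dots> = (if z = y then 1 else 0)" using G by simp
      finally show "op_diff (chi Z) (op_sum (\<lambda>x. \<Phi> (exy x x)) G) (delta y) z =
          (if z = y then (if y \<in> Z then 1 else 0) - 1 else 0)"
        by (simp add: op_diff_def opsum_diag chi_apply_delta)
    qed
    hence "l2norm (op_diff (chi Z) (op_sum (\<lambda>x. \<Phi> (exy x x)) G) (delta y)) = cmod ((if y \<in> Z then 1 else 0) - 1)"
      by (simp add: l2norm_single')
    moreover have "l2norm (op_diff (chi Z) (op_sum (\<lambda>x. \<Phi> (exy x x)) G) (delta y)) < 1/2"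
      using F(2) G by blast
    ultimately show "y \<in> Z" by (cases "y \<in> Z") auto
  qed
qed

lemma Phi_chi:
  obtains h where "\<Phi> (chi B) = mult_op h" "bounded (range h)" "\<And>y. y \<notin> B \<Longrightarrow> h (phi y) = 0"
proof -
  have "\<Phi> (chi B) \<in> linf" by (rule subsetD[OF lin imageI[OF chi_linf]])
  hence "\<exists>h. \<Phi> (chi B) = mult_op h \<and> bounded (range h)" by (simp add: linf_def)
  then obtain h where h: "\<Phi> (chi B) = mult_op h" "bounded (range h)" by blast
  have hz: "h (phi y) = 0" if "y \<notin> B" for y
  proof -
    have "\<Phi> (chi B \<circ> exy y y) = Z0" by (simp add: chi_comp_exy_out[OF that] Phi_Z0)
    hence "mult_op h \<circ> exy (phi y) (phi y) = Z0"
      using Phi_comp[OF chi_uroe exy_uroe_diag, of B y] h(1) Phi_diag by simp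
    hence "mult_op h (exy (phi y) (phi y) (delta (phi y))) (phi y) = Z0 (delta (phi y)) (phi y)"
      by (metis comp_apply)
    thus ?thesis by (simp only: exy_delta mult_op_delta) (simp add: Z0_def)
  qed
  show ?thesis using that[OF h(1) h(2) hz] .
qed

lemma coarse:
  assumes ulf: "unif_locally_finite TYPE('a)"
  shows "coarse_map phi"
  unfolding coarse_map_def
proof
  fix r :: real
  have T: "(band r :: 'a op) \<in> uroe" by (rule band_uroe[OF ulf])
  have "\<Phi> (band r) \<in> uroe" by (rule Phi_uroe[OF T])
  hence "\<forall>e>0. \<exists>S. bop S \<and> (\<exists>k. propg_le S k) \<and> op_norm (op_diff (\<Phi> (band r)) S) < e"
    by (simp add: uroe_def)
  from this[rule_format, OF zero_less_one] obtain S k where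
    S: "bop S" "propg_le S k" "op_norm (op_diff (\<Phi> (band r)) S) < 1" by blast
  have bPT: "bop (\<Phi> (band r))" by (rule Phi_bop[OF T])
  have bD: "bop (op_diff (\<Phi> (band r)) S)" by (rule bop_op_diff[OF bPT S(1)])
  show "\<exists>s. \<forall>x x'. dist x x' \<le> r \<longrightarrow> dist (phi x) (phi x') \<le> s"
  proof (intro exI allI impI)
    fix x x' :: 'a assume d: "dist x x' \<le> r"
    define u where "u = band r (delta x)"
    have u: "u \<in> l2" unfolding u_def by (rule bop_l2[OF band_bop[OF ulf] delta_l2])
    have "band r \<circ> exy x x = rk1 u x" unfolding u_def by (rule bop_comp_exy[OF band_bop[OF ulf]])
    hence "\<Phi> (rk1 u x) = \<Phi> (band r) \<circ> exy (phi x) (phi x)"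
      using Phi_comp[OF T exy_uroe_diag, of x] Phi_diag by simp
    hence E: "\<Phi> (rk1 u x) (delta (phi x)) = \<Phi> (band r) (delta (phi x))" by (simp add: exy_delta)
    have P: "cmod (\<Phi> (rk1 u x) (delta (phi x)) (phi x')) = cmod (u x')" by (rule Phi_rk1_point[OF u])
    have "u x' = 1" unfolding u_def using d by (simp add: band_delta[OF ulf] dist_commute)
    hence one: "cmod (\<Phi> (band r) (delta (phi x)) (phi x')) = 1" using P E by simp
    have "cmod (op_diff (\<Phi> (band r)) S (delta (phi x)) (phi x')) \<le> op_norm (op_diff (\<Phi> (band r)) S) * l2norm (delta (phi x))"
      by (rule point_le_op[OF bD delta_l2])
    hence lt: "cmod (op_diff (\<Phi> (band r)) S (delta (phi x)) (phi x')) < 1" using S(3) by simp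
    have "S (delta (phi x)) (phi x') \<noteq> 0"
    proof
      assume "S (delta (phi x)) (phi x') = 0"
      hence "op_diff (\<Phi> (band r)) S (delta (phi x)) (phi x') = \<Phi> (band r) (delta (phi x)) (phi x')"
        by (simp add: op_diff_def)
      thus False using one lt by simp
    qed
    thus "dist (phi x) (phi x') \<le> k" using S(2) by (simp add: propg_le_def entry_def)
  qed
qed

end



context emb_setup begin

lemma term_bound:
  assumes ulfX: "unif_locally_finite TYPE('a)" and Zr: "Z = range phi"
    and c: "bop c" "\<And>f. c (chi Z f) = c f" "propg_le c k"
    and \<alpha>: "\<alpha> \<in> uroe" and \<alpha>': "bop \<alpha>'" "propg_le \<alpha>' k'" "op_norm (op_diff \<alpha> \<alpha>') < \<eta>"
    and k\<delta>: "k' < \<delta>"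
    and far: "\<And>w. w \<in> phi ` cball x \<delta> \<Longrightarrow> dist z w > k"
  shows "cmod (c (\<Phi> \<alpha> (delta (phi x))) z) \<le> op_norm c * \<eta>"
proof -
  define B where "B = cball x \<delta>"
  obtain N :: nat where "\<And>y::'a. finite (cball y \<delta>)" using ulf_bound[OF ulfX] by blast
  hence finB: "finite B" by (simp add: B_def)
  have b\<alpha>: "bop \<alpha>" by (rule uroe_bop[OF \<alpha>])
  define w where "w = \<alpha> (delta x)"
  have w: "w \<in> l2" unfolding w_def by (rule bop_l2[OF b\<alpha> delta_l2])
  define wB where "wB = (\<lambda>y. if y \<in> B then w y else 0)"
  define wC where "wC = (\<lambda>y. if y \<in> B then 0 else w y)"
  have wB: "wB \<in> l2" by (rule l2_mono(1)[OF w]) (simp add: wB_def)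
  have wC: "wC \<in> l2" by (rule l2_mono(1)[OF w]) (simp add: wC_def)
  have wsum: "(\<lambda>z. wB z + wC z) = w" by (auto simp: wB_def wC_def fun_eq_iff)
  define d where "d = delta (phi x)"
  define v1 where "v1 = \<Phi> (rk1 wB x) d"
  define v2 where "v2 = \<Phi> (rk1 wC x) d"
  have v1: "v1 \<in> l2" unfolding v1_def d_def by (rule bop_l2[OF Phi_bop[OF rk1_uroe[OF wB]] delta_l2])
  have v2: "v2 \<in> l2" unfolding v2_def d_def by (rule bop_l2[OF Phi_bop[OF rk1_uroe[OF wC]] delta_l2])
  have "\<Phi> \<alpha> d = \<Phi> \<alpha> (\<Phi> (exy x x) d)" by (simp add: Phi_diag exy_delta d_def)
  also have "\<dots> = \<Phi> (\<alpha> \<circ> exy x x) d" using Phi_comp[OF \<alpha> exy_uroe_diag, of x] by simp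
  also have "\<alpha> \<circ> exy x x = rk1 w x" unfolding w_def by (rule bop_comp_exy[OF b\<alpha>])
  also have "rk1 w x = op_add (rk1 wB x) (rk1 wC x)" by (simp add: op_add_rk1 wsum)
  also have "\<Phi> (op_add (rk1 wB x) (rk1 wC x)) = op_add (\<Phi> (rk1 wB x)) (\<Phi> (rk1 wC x))"
    by (rule Phi_add[OF rk1_uroe[OF wB] rk1_uroe[OF wC]])
  finally have A: "\<Phi> \<alpha> d = (\<lambda>y. v1 y + v2 y)" by (simp add: op_add_def v1_def v2_def)
  have cA: "c (\<Phi> \<alpha> d) = (\<lambda>y. c v1 y + c v2 y)" unfolding A by (rule bop_add[OF c(1) v1 v2])
  \<comment> \<open>the near part vanishes at z\<close>
  obtain h where h: "\<Phi> (chi B) = mult_op h" "bounded (range h)" "\<And>y. y \<notin> B \<Longrightarrow> h (phi y) = 0"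
    using Phi_chi by blast
  have "(\<lambda>z. (if z \<in> B then (1::complex) else 0) * wB z) = wB" by (auto simp: wB_def fun_eq_iff)
  hence "chi B \<circ> rk1 wB x = rk1 wB x" unfolding chi_def by (simp add: mult_op_comp_rk1[OF wB bounded_indicator])
  hence "\<Phi> (rk1 wB x) = mult_op h \<circ> \<Phi> (rk1 wB x)"
    using Phi_comp[OF chi_uroe rk1_uroe[OF wB], of B x] h(1) by simp
  hence "v1 = mult_op h v1" unfolding v1_def by (metis comp_apply)
  hence v1h: "v1 y = h y * v1 y" for y using mult_op_apply[OF v1, of h] by metis
  define g where "g = chi Z v1"
  have g: "g = (\<lambda>y. (if y \<in> Z then 1 else 0) * v1 y)" unfolding g_def chi_def by (rule mult_op_apply[OF v1])
  have gl2: "g \<in> l2" unfolding g_def by (rule bop_l2[OF uroe_bop[OF chi_uroe] v1])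
  have gsupp: "g y = 0" if "y \<notin> phi ` B" for y
  proof (cases "y \<in> Z")
    case True
    then obtain y' where y': "y = phi y'" using Zr by blast
    hence "y' \<notin> B" using that by blast
    hence "h y = 0" using h(3) y' by blast
    thus ?thesis using v1h[of y] by (simp add: g)
  qed (simp add: g)
  have fin: "finite (phi ` B)" using finB by simp
  have gexp: "g = (\<lambda>t. \<Sum>s\<in>phi ` B. g s * delta s t)" by (rule finite_expand[OF fin gsupp])
  have "c v1 = c g" unfolding g_def by (rule c(2)[symmetric])
  also have "\<dots> = (\<lambda>t. \<Sum>s\<in>phi ` B. g s * c (delta s) t)"
    by (subst gexp, rule bop_sum[OF c(1) fin delta_l2])
  finally have cv1: "c v1 z = (\<Sum>s\<in>phi ` B. g s * c (delta s) z)" by simp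
  have "c (delta s) z = 0" if "s \<in> phi ` B" for s
  proof (rule ccontr)
    assume "c (delta s) z \<noteq> 0"
    hence "dist s z \<le> k" using c(3) by (simp add: propg_le_def entry_def)
    moreover have "dist z s > k" using far that by (simp add: B_def)
    ultimately show False by (simp add: dist_commute)
  qed
  hence cv10: "c v1 z = 0" unfolding cv1 by (simp add: sum.neutral)
  \<comment> \<open>the far part is small\<close>
  have bD: "bop (op_diff \<alpha> \<alpha>')" by (rule bop_op_diff[OF b\<alpha> \<alpha>'(1)])
  have le: "cmod (wC y) \<le> cmod (op_diff \<alpha> \<alpha>' (delta x) y)" for y
  proof (cases "y \<in> B")
    case True thus ?thesis by (simp add: wC_def)
  next
    case False
    hence "dist x y > \<delta>" by (simp add: B_def)
    hence "entry \<alpha>' x y = 0" using \<alpha>'(2) k\<delta> unfolding propg_le_def by force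
    hence "op_diff \<alpha> \<alpha>' (delta x) y = w y" by (simp add: entry_def op_diff_def w_def)
    thus ?thesis using False by (simp add: wC_def)
  qed
  have "l2norm wC \<le> l2norm (op_diff \<alpha> \<alpha>' (delta x))"
    by (rule l2_mono(2)[OF bop_l2[OF bD delta_l2] le])
  also have "\<dots> \<le> op_norm (op_diff \<alpha> \<alpha>') * l2norm (delta x)" by (rule op_norm_bound[OF bD delta_l2])
  finally have wCn: "l2norm wC \<le> \<eta>" using \<alpha>'(3) by simp
  have "l2norm v2 = l2norm wC" unfolding v2_def d_def by (rule Phi_rk1_norm[OF wC])
  hence "cmod (c v2 z) \<le> op_norm c * l2norm wC" using point_le_op[OF c(1) v2, of z] by simp
  also have "\<dots> \<le> op_norm c * \<eta>" by (rule mult_left_mono[OF wCn op_norm_nonneg[OF c(1)]])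
  finally have "cmod (c v2 z) \<le> op_norm c * \<eta>" .
  thus ?thesis using cA cv10 by (simp add: d_def)
qed

end



lemma A2_props:
  assumes "c \<in> {chi Z \<circ> b \<circ> chi Z | b. b \<in> (uroe :: ('b::metric_space) op set)}"
  shows "bop c" "\<And>f. c (chi Z f) = c f"
proof -
  obtain b where b: "c = chi Z \<circ> b \<circ> chi Z" "b \<in> uroe" using assms by blast
  have bc: "bop (chi Z :: 'b op)" by (rule uroe_bop[OF chi_uroe])
  show "bop c" unfolding b(1) by (intro bop_comp bc uroe_bop[OF b(2)])
  fix f show "c (chi Z f) = c f" unfolding b(1) by (simp add: chi_idem_app)
qed

context emb_setup begin

lemma quotient:
  assumes ulfX: "unif_locally_finite TYPE('a)" and ulfY: "unif_locally_finite TYPE('b)"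
    and eps: "\<epsilon> < 1" and cob: "almost_cobounded \<epsilon> (\<Phi> ` uroe) {chi Z \<circ> b \<circ> chi Z | b. b \<in> uroe}"
    and Zr: "Z = range phi"
  shows "\<exists>K>0. \<forall>r>0. \<exists>\<delta>>0. \<forall>x. cball (phi x) r \<inter> Z \<subseteq> {z\<in>Z. \<exists>w\<in>phi ` cball x \<delta>. dist z w \<le> K}"
proof -
  define A2 where "A2 = {chi Z \<circ> b \<circ> chi Z | b. b \<in> (uroe :: 'b op set)}"
  from cob obtain k where k: "k > 0" and kc: "\<forall>b\<in>A2. \<exists>(l::nat) a c.
      (\<forall>i<l. a i \<in> \<Phi> ` uroe \<and> c i \<in> A2 \<and> propg_le (c i) k)
      \<and> op_norm (op_diff b (op_sum (\<lambda>i. c i \<circ> a i) {..<l})) \<le> \<epsilon>"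
    unfolding almost_cobounded_def A2_def by blast
  show ?thesis
  proof (rule exI[of _ k], intro conjI allI impI k)
    fix r :: real assume r: "r > 0"
    define b where "b = chi Z \<circ> band r \<circ> chi Z"
    have bA: "b \<in> A2" unfolding b_def A2_def using band_uroe[OF ulfY] by blast
    obtain l :: nat and a c where lac: "\<forall>i<l. a i \<in> \<Phi> ` uroe \<and> c i \<in> A2 \<and> propg_le (c i) k"
      and nb: "op_norm (op_diff b (op_sum (\<lambda>i. c i \<circ> a i) {..<l})) \<le> \<epsilon>"
      using kc bA by blast
    have "\<forall>i\<in>{..<l}. \<exists>\<alpha>. \<alpha> \<in> uroe \<and> a i = \<Phi> \<alpha>" using lac by blast
    from bchoice[OF this] obtain \<alpha> where \<alpha>: "\<forall>i\<in>{..<l}. \<alpha> i \<in> uroe \<and> a i = \<Phi> (\<alpha> i)" by blast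
    have cp: "bop (c i)" "\<And>f. c i (chi Z f) = c i f" "propg_le (c i) k" if "i < l" for i
    proof -
      have "c i \<in> A2" using lac that by blast
      thus "bop (c i)" "\<And>f. c i (chi Z f) = c i f" using A2_props unfolding A2_def by blast+
      show "propg_le (c i) k" using lac that by blast
    qed
    define M where "M = 1 + (\<Sum>i<l. op_norm (c i))"
    have "(\<Sum>i<l. op_norm (c i)) \<ge> 0" using cp(1) by (intro sum_nonneg) (simp add: op_norm_nonneg)
    hence M1: "M \<ge> 1" unfolding M_def by simp
    define \<eta> where "\<eta> = (1 - \<epsilon>) / (2 * M)"
    have \<eta>: "\<eta> > 0" using eps M1 by (simp add: \<eta>_def)
    have M\<eta>: "M * \<eta> = (1 - \<epsilon>) / 2" using M1 by (simp add: \<eta>_def)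
    have "\<forall>i\<in>{..<l}. \<exists>S. bop S \<and> (\<exists>k. propg_le S k) \<and> op_norm (op_diff (\<alpha> i) S) < \<eta>"
    proof
      fix i assume "i \<in> {..<l}"
      hence "\<alpha> i \<in> uroe" using \<alpha> by blast
      hence "\<forall>e>0. \<exists>S. bop S \<and> (\<exists>k. propg_le S k) \<and> op_norm (op_diff (\<alpha> i) S) < e"
        by (simp add: uroe_def)
      thus "\<exists>S. bop S \<and> (\<exists>k. propg_le S k) \<and> op_norm (op_diff (\<alpha> i) S) < \<eta>" using \<eta> by blast
    qed
    from bchoice[OF this] obtain \<alpha>' where \<alpha>': "\<forall>i\<in>{..<l}. bop (\<alpha>' i) \<and> (\<exists>k. propg_le (\<alpha>' i) k) \<and> op_norm (op_diff (\<alpha> i) (\<alpha>' i)) < \<eta>"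
      by blast
    hence "\<forall>i\<in>{..<l}. \<exists>k. propg_le (\<alpha>' i) k" by blast
    from bchoice[OF this] obtain k' where k': "\<forall>i\<in>{..<l}. propg_le (\<alpha>' i) (k' i)" by blast
    define \<delta> where "\<delta> = 1 + (\<Sum>i<l. \<bar>k' i\<bar>)"
    have "(\<Sum>i<l. \<bar>k' i\<bar>) \<ge> 0" by (rule sum_nonneg) simp
    hence \<delta>0: "\<delta> > 0" unfolding \<delta>_def by linarith
    have k\<delta>: "k' i < \<delta>" if "i < l" for i
    proof -
      have "\<bar>k' i\<bar> \<le> (\<Sum>i<l. \<bar>k' i\<bar>)" by (rule member_le_sum) (use that in auto)
      thus ?thesis unfolding \<delta>_def by linarith
    qed
    show "\<exists>\<delta>>0. \<forall>x. cball (phi x) r \<inter> Z \<subseteq> {z \<in> Z. \<exists>w\<in>phi ` cball x \<delta>. dist z w \<le> k}"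
    proof (rule exI[of _ \<delta>], intro conjI allI subsetI \<delta>0)
      fix x z assume zin: "z \<in> cball (phi x) r \<inter> Z"
      show "z \<in> {z \<in> Z. \<exists>w\<in>phi ` cball x \<delta>. dist z w \<le> k}"
      proof (rule ccontr)
        assume nz: "z \<notin> {z \<in> Z. \<exists>w\<in>phi ` cball x \<delta>. dist z w \<le> k}"
        have far: "dist z w > k" if "w \<in> phi ` cball x \<delta>" for w
          using nz zin that by (auto simp: not_le)
        define d where "d = delta (phi x)"
        have terms: "cmod (c i (a i d) z) \<le> op_norm (c i) * \<eta>" if i: "i < l" for i
        proof -
          have ai: "\<alpha> i \<in> uroe" "a i = \<Phi> (\<alpha> i)" using \<alpha> i by auto
          have a'i: "bop (\<alpha>' i)" "op_norm (op_diff (\<alpha> i) (\<alpha>' i)) < \<eta>" using \<alpha>' i by auto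
          have k'i: "propg_le (\<alpha>' i) (k' i)" using k' i by auto
          have "cmod (c i (\<Phi> (\<alpha> i) (delta (phi x))) z) \<le> op_norm (c i) * \<eta>"
            by (rule term_bound[OF ulfX Zr cp(1)[OF i] cp(2)[OF i] cp(3)[OF i] ai(1) a'i(1) k'i a'i(2) k\<delta>[OF i] far])
          thus ?thesis by (simp add: ai(2) d_def)
        qed
        have cd: "chi Z d = d"
          using Zr by (auto simp: chi_def mult_op_def delta_def fun_eq_iff d_def)
        have bl: "band r d \<in> l2" unfolding d_def by (rule bop_l2[OF band_bop[OF ulfY] delta_l2])
        have "b d z = chi Z (band r (chi Z d)) z" by (simp add: b_def)
        also have "\<dots> = chi Z (band r d) z" by (simp only: cd)
        also have "\<dots> = (if z \<in> Z then 1 else 0) * band r d z"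
          by (simp add: chi_def mult_op_apply[OF bl])
        also have "\<dots> = 1" using zin unfolding d_def by (simp add: band_delta[OF ulfY] dist_commute)
        finally have b1: "b d z = 1" .
        have bc: "bop (chi Z :: 'b op)" by (rule uroe_bop[OF chi_uroe])
        have bb: "bop b" unfolding b_def by (intro bop_comp bc band_bop[OF ulfY])
        have bs: "bop (op_sum (\<lambda>i. c i \<circ> a i) {..<l})"
        proof (rule bop_op_sum)
          fix i assume "i \<in> {..<l}"
          hence i: "i < l" by simp
          have "a i = \<Phi> (\<alpha> i)" "\<alpha> i \<in> uroe" using \<alpha> i by auto
          thus "bop (c i \<circ> a i)" using bop_comp[OF cp(1)[OF i] Phi_bop] by simp
        qed simp
        have bD: "bop (op_diff b (op_sum (\<lambda>i. c i \<circ> a i) {..<l}))" by (rule bop_op_diff[OF bb bs])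
        have "cmod (op_diff b (op_sum (\<lambda>i. c i \<circ> a i) {..<l}) d z)
            \<le> op_norm (op_diff b (op_sum (\<lambda>i. c i \<circ> a i) {..<l})) * l2norm d"
          unfolding d_def by (rule point_le_op[OF bD delta_l2])
        hence D: "cmod (op_diff b (op_sum (\<lambda>i. c i \<circ> a i) {..<l}) d z) \<le> \<epsilon>"
          using nb by (simp add: d_def)
        have Deq: "op_diff b (op_sum (\<lambda>i. c i \<circ> a i) {..<l}) d z = b d z - (\<Sum>i<l. c i (a i d) z)"
          by (simp add: op_diff_def op_sum_def)
        have "cmod (\<Sum>i<l. c i (a i d) z) \<le> (\<Sum>i<l. cmod (c i (a i d) z))" by (rule norm_sum)
        also have "\<dots> \<le> (\<Sum>i<l. op_norm (c i) * \<eta>)" by (rule sum_mono) (simp add: terms)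
        also have "\<dots> = (M - 1) * \<eta>" by (simp add: M_def sum_distrib_right)
        finally have S: "cmod (\<Sum>i<l. c i (a i d) z) \<le> (M - 1) * \<eta>" .
        have "1 = cmod (b d z)" by (simp add: b1)
        also have "b d z = op_diff b (op_sum (\<lambda>i. c i \<circ> a i) {..<l}) d z + (\<Sum>i<l. c i (a i d) z)"
          by (simp add: Deq)
        also have "cmod \<dots> \<le> cmod (op_diff b (op_sum (\<lambda>i. c i \<circ> a i) {..<l}) d z) + cmod (\<Sum>i<l. c i (a i d) z)"
          by (rule norm_triangle_ineq)
        finally have "1 \<le> \<epsilon> + (M - 1) * \<eta>" using D S by linarith
        moreover have "(M - 1) * \<eta> = (1 - \<epsilon>) / 2 - \<eta>" using M\<eta> by (simp add: algebra_simps)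
        ultimately have "1 \<le> \<epsilon> + ((1 - \<epsilon>) / 2 - \<eta>)" by simp
        moreover have "\<epsilon> + ((1 - \<epsilon>) / 2 - \<eta>) < 1" using \<eta> eps by (simp add: field_simps)
        ultimately show False by simp
      qed
    qed
  qed
qed

end

theorem lemma4p5:
  fixes \<Phi> :: "('a::metric_space) op \<Rightarrow> ('b::metric_space) op"
    and Z :: "'b set" and \<epsilon> :: real
  assumes "unif_locally_finite TYPE('a)" and "unif_locally_finite TYPE('b)"
    and "embedding \<Phi>"
    and "\<Phi> ` linf \<subseteq> linf"
    and "\<forall>x::'a. rank_one (\<Phi> (exy x x))"
    and "sot_sum (\<lambda>x::'a. \<Phi> (exy x x)) (chi Z)"
    and "0 < \<epsilon>" and "\<epsilon> < 1"
    and "almost_cobounded \<epsilon> (\<Phi> ` uroe) {chi Z \<circ> b \<circ> chi Z | b. b \<in> uroe}"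
  shows "\<exists>f::'a \<Rightarrow> 'b. bij_betw f UNIV Z \<and> coarse_quotient_on f Z"
proof -
  interpret E: emb_setup \<Phi> using assms(3,4,5) by (rule emb_setup.intro)
  have Z: "Z = range E.phi" by (rule E.Z_range[OF assms(6)])
  have bij: "bij_betw E.phi UNIV Z" using E.phi_inj Z by (simp add: bij_betw_def)
  have h1: "E.phi ` UNIV \<subseteq> Z" using Z by simp
  have h2: "coarse_map E.phi" by (rule E.coarse[OF assms(1)])
  have h3: "\<exists>K>0. \<forall>r>0. \<exists>\<delta>>0. \<forall>x. cball (E.phi x) r \<inter> Z \<subseteq> {z\<in>Z. \<exists>w\<in>E.phi ` cball x \<delta>. dist z w \<le> K}"
    by (rule E.quotient[OF assms(1,2,8,9) Z])
  have "coarse_quotient_on E.phi Z" unfolding coarse_quotient_on_def by (intro conjI h1 h2 h3)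
  thus ?thesis using bij by blast
qed


end
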